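(* Let $F>1$ and $s>0$ be constants. Consider the self-adjusting $(1,\lambda)$ EA (defined in the context) with update strength $F$ and success rate $s$, using either standard bit mutation with mutation probability $p \in O(1/n) \cap n^{-O(1)}$ or the heavy-tailed mutation operator with a constant $\beta>1$. Let $f$ be any everywhere hard function with $d+1 = n^{o(\log n)}$ distinct function values. Then for every initial search point and every initial offspring population size $\lambda_0$, the expected number of generations until the algorithm optimises $f$ (i.e. until the current search point is a global optimum) is \[ O\left(d + \log(1/p_{\min})\right). \]
   Context: Search space $\{0,1\}^n$; asymptotic notation is with respect to $n\to\infty$. Since the algorithm only uses comparisons, the fitness function $f$ is assumed w.l.o.g. to take values in $\{0,1,\dots,d\}$, where $d+1$ is the number of distinct fitness values and the search points of fitness $d$ are exactly the global optima. Self-adjusting $(1,\lambda)$ EA with update strength $F$ and success rate $s$: it maintains a current search point $x$ and a real-valued offspring population size $\lambda$ (rounded to a nearest integer whenever an integer is needed); by default $x$ is uniform random and $\lambda=1$ initially. In each generation it creates $\lambda$ offspring independently by applying the mutation operator to $x$, picks an offspring $y$ of maximum fitness among them (ties broken uniformly at random), and sets $x \leftarrow y$ in any case (non-elitist). If $f(y)>f(x)$ (a success), $\lambda \leftarrow \max\{1,\lambda/F\}$; otherwise $\lambda \leftarrow F^{1/s}\lambda$. Standard bit mutation with probability $p$ flips each bit independently with probability $p$. The heavy-tailed mutation operator with parameter $\beta>1$ first draws $\chi\in\{1,\dots,n/2\}$ with $\Pr[\chi=i] = i^{-\beta}/\sum_{j=1}^{n/2} j^{-\beta}$, then performs standard bit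 mutation with probability $\chi/n$. For a search point $x$, $p_x^+$ denotes the probability that a single offspring of $x$ (one application of the mutation operator) has strictly larger fitness than $x$. $p_{\min} := \min\{p_x^+ : f(x)<d\}$ and $p_{\max} := \max\{p_x^+ : f(x)<d\}$. The function $f$ is called everywhere hard (for the algorithm) if $p_{\max} = O(n^{-\varepsilon})$ for some constant $0<\varepsilon<1$. *)

theory Defs
  imports "HOL-Probability.Probability" "HOL-Library.Landau_Symbols"
begin

text \<open>Search points of {0,1}^n are bool lists of length n.\<close>

fun std_bit_mut :: "real \<Rightarrow> bool list \<Rightarrow> bool list pmf" where
  "std_bit_mut p [] = return_pmf []"
| "std_bit_mut p (b # bs) =
     bind_pmf (bernoulli_pmf p) (\<lambda>c. map_pmf (\<lambda>r. (if c then \<not> b else b) # r) (std_bit_mut p bs))"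

definition power_law_pmf :: "nat \<Rightarrow> real \<Rightarrow> nat pmf" where
  "power_law_pmf n \<beta> = embed_pmf (\<lambda>i. if 1 \<le> i \<and> i \<le> n div 2
      then real i powr (-\<beta>) / (\<Sum>j=1..n div 2. real j powr (-\<beta>)) else 0)"

definition heavy_tailed_mut :: "real \<Rightarrow> bool list \<Rightarrow> bool list pmf" where
  "heavy_tailed_mut \<beta> x =
     bind_pmf (power_law_pmf (length x) \<beta>) (\<lambda>chi. std_bit_mut (real chi / real (length x)) x)"

fun iid_list :: "nat \<Rightarrow> 'a pmf \<Rightarrow> 'a list pmf" where
  "iid_list 0 M = return_pmf []"
| "iid_list (Suc k) M = bind_pmf M (\<lambda>y. map_pmf (\<lambda>ys. y # ys) (iid_list k M))"

definition select_best :: "(bool list \<Rightarrow> nat) \<Rightarrow> bool list list \<Rightarrow> bool list pmf" where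
  "select_best f ys = map_pmf (\<lambda>i. ys ! i)
     (pmf_of_set {i. i < length ys \<and> (\<forall>j < length ys. f (ys ! j) \<le> f (ys ! i))})"

definition ea_step :: "real \<Rightarrow> real \<Rightarrow> (bool list \<Rightarrow> bool list pmf) \<Rightarrow> (bool list \<Rightarrow> nat)
    \<Rightarrow> bool list \<times> real \<Rightarrow> (bool list \<times> real) pmf" where
  "ea_step F s mut f st = (case st of (x, lam) \<Rightarrow>
     bind_pmf (iid_list (nat (round lam)) (mut x)) (\<lambda>ys.
     map_pmf (\<lambda>y. (y, if f y > f x then max 1 (lam / F) else F powr (1 / s) * lam))
       (select_best f ys)))"

text \<open>The chain stopped (absorbed) once the current search point is optimal (fitness d).\<close>
definition ea_step_stopped :: "real \<Rightarrow> real \<Rightarrow> (bool list \<Rightarrow> bool list pmf) \<Rightarrow> (bool list \<Rightarrow> nat)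
    \<Rightarrow> nat \<Rightarrow> bool list \<times> real \<Rightarrow> (bool list \<times> real) pmf" where
  "ea_step_stopped F s mut f d st =
     (if f (fst st) = d then return_pmf st else ea_step F s mut f st)"

definition ea_dist :: "real \<Rightarrow> real \<Rightarrow> (bool list \<Rightarrow> bool list pmf) \<Rightarrow> (bool list \<Rightarrow> nat)
    \<Rightarrow> nat \<Rightarrow> bool list \<Rightarrow> real \<Rightarrow> nat \<Rightarrow> (bool list \<times> real) pmf" where
  "ea_dist F s mut f d x0 lam0 t =
     ((\<lambda>M. bind_pmf M (ea_step_stopped F s mut f d)) ^^ t) (return_pmf (x0, lam0))"

text \<open>Expected number of generations T until the current search point is optimal,
  via E[T] = sum over t of Pr[T > t] (value in ennreal, possibly infinite).\<close>
definition expected_gens :: "real \<Rightarrow> real \<Rightarrow> (bool list \<Rightarrow> bool list pmf) \<Rightarrow> (bool list \<Rightarrow> nat)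
    \<Rightarrow> nat \<Rightarrow> bool list \<Rightarrow> real \<Rightarrow> ennreal" where
  "expected_gens F s mut f d x0 lam0 =
     (\<Sum>t. ennreal (measure_pmf.prob (ea_dist F s mut f d x0 lam0 t) {st. f (fst st) \<noteq> d}))"

definition p_plus :: "(bool list \<Rightarrow> bool list pmf) \<Rightarrow> (bool list \<Rightarrow> nat) \<Rightarrow> bool list \<Rightarrow> real" where
  "p_plus mut f x = measure_pmf.prob (mut x) {y. f y > f x}"

text \<open>p_min / p_max over non-optimal search points of length n
  (conventions for the degenerate case where every point is optimal: p_min = 1, p_max = 0).\<close>
definition p_min :: "nat \<Rightarrow> (bool list \<Rightarrow> bool list pmf) \<Rightarrow> (bool list \<Rightarrow> nat) \<Rightarrow> nat \<Rightarrow> real" where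
  "p_min n mut f d = (if {x. length x = n \<and> f x < d} = {} then 1
     else Min (p_plus mut f ` {x. length x = n \<and> f x < d}))"

definition p_max :: "nat \<Rightarrow> (bool list \<Rightarrow> bool list pmf) \<Rightarrow> (bool list \<Rightarrow> nat) \<Rightarrow> nat \<Rightarrow> real" where
  "p_max n mut f d = (if {x. length x = n \<and> f x < d} = {} then 0
     else Max (p_plus mut f ` {x. length x = n \<and> f x < d}))"

end

theory Submission
  imports Defs
begin



lemma drift_sum:
  fixes step :: "'s \<Rightarrow> 's pmf" and Phi :: "'s \<Rightarrow> ennreal" and Inv Tgt :: "'s \<Rightarrow> bool"
  assumes inv0: "Inv s0"
  and inv_step: "\<And>s s'. Inv s \<Longrightarrow> s' \<in> set_pmf (step s) \<Longrightarrow> Inv s'"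
  and drift: "\<And>s. Inv s \<Longrightarrow> \<not> Tgt s \<Longrightarrow> (\<integral>\<^sup>+ s'. Phi s' \<partial>step s) + 1 \<le> Phi s"
  and tgt: "\<And>s. Inv s \<Longrightarrow> Tgt s \<Longrightarrow> step s = return_pmf s"
  shows "(\<Sum>t. emeasure (((\<lambda>M. bind_pmf M step) ^^ t) (return_pmf s0)) {s. \<not> Tgt s}) \<le> Phi s0"
proof -
  define D where "D t = ((\<lambda>M. bind_pmf M step) ^^ t) (return_pmf s0)" for t
  have Dsuc: "D (Suc t) = bind_pmf (D t) step" for t by (simp add: D_def)
  have D0: "D 0 = return_pmf s0" by (simp add: D_def)
  have invD: "\<forall>s\<in>set_pmf (D t). Inv s" for t
    by (induction t) (auto simp: Dsuc D0 inv0 dest: inv_step)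
  define E where "E t = (\<integral>\<^sup>+ s. Phi s \<partial>D t)" for t
  have key: "E (Suc t) + emeasure (D t) {s. \<not> Tgt s} \<le> E t" for t
  proof -
    have "E (Suc t) + emeasure (D t) {s. \<not> Tgt s}
        = (\<integral>\<^sup>+ s. (\<integral>\<^sup>+ s'. Phi s' \<partial>step s) \<partial>D t) + (\<integral>\<^sup>+ s. indicator {s. \<not> Tgt s} s \<partial>D t)"
      by (simp add: E_def Dsuc)
    also have "\<dots> = (\<integral>\<^sup>+ s. (\<integral>\<^sup>+ s'. Phi s' \<partial>step s) + indicator {s. \<not> Tgt s} s \<partial>D t)"
      by (rule nn_integral_add[symmetric]) auto
    also have "\<dots> \<le> (\<integral>\<^sup>+ s. Phi s \<partial>D t)"
    proof (rule nn_integral_mono_AE, rule AE_pmfI)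
      fix s assume s: "s \<in> set_pmf (D t)"
      then have "Inv s" using invD by blast
      show "(\<integral>\<^sup>+ s'. Phi s' \<partial>step s) + indicator {s. \<not> Tgt s} s \<le> Phi s"
      proof (cases "Tgt s")
        case True
        then show ?thesis using tgt[OF \<open>Inv s\<close> True] by (simp add: nn_integral_return_pmf)
      next
        case False
        then show ?thesis using drift[OF \<open>Inv s\<close> False] by simp
      qed
    qed
    finally show ?thesis by (simp add: E_def)
  qed
  have partial: "(\<Sum>t<N. emeasure (D t) {s. \<not> Tgt s}) + E N \<le> E 0" for N
  proof (induction N)
    case 0 then show ?case by simp
  next
    case (Suc N)
    have "(\<Sum>t<Suc N. emeasure (D t) {s. \<not> Tgt s}) + E (Suc N)
        = (\<Sum>t<N. emeasure (D t) {s. \<not> Tgt s}) + (E (Suc N) + emeasure (D N) {s. \<not> Tgt s})"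
      by (simp add: algebra_simps)
    also have "\<dots> \<le> (\<Sum>t<N. emeasure (D t) {s. \<not> Tgt s}) + E N"
      using key by (intro add_left_mono) auto
    finally show ?case using Suc.IH by (rule order.trans)
  qed
  have E0: "E 0 = Phi s0" by (simp add: E_def D0 nn_integral_return_pmf)
  have "(\<Sum>t<N. emeasure (D t) {s. \<not> Tgt s}) \<le> Phi s0" for N
    using partial[of N] E0 by (metis add_increasing2 dual_order.trans le_iff_add zero_le)
  then have "(\<Sum>t. emeasure (D t) {s. \<not> Tgt s}) \<le> Phi s0"
    by (simp add: suminf_eq_SUP SUP_least)
  then show ?thesis by (simp add: D_def)
qed


lemma set_iid: "ys \<in> set_pmf (iid_list k M) \<Longrightarrow> length ys = k \<and> set ys \<subseteq> set_pmf M"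
  by (induction k arbitrary: ys) (auto, blast)

lemma emeasure_iid_all:
  "emeasure (iid_list k M) {ys. \<forall>y\<in>set ys. P y} = ennreal (measure_pmf.prob M {y. P y} ^ k)"
proof (induction k)
  case 0 then show ?case by (simp add: measure_pmf.emeasure_eq_measure)
next
  case (Suc k)
  have pre: "(Cons y) -` {ys. \<forall>y\<in>set ys. P y} = (if P y then {ys. \<forall>y\<in>set ys. P y} else {})" for y
    by auto
  have "emeasure (iid_list (Suc k) M) {ys. \<forall>y\<in>set ys. P y}
      = (\<integral>\<^sup>+ y. emeasure (map_pmf (Cons y) (iid_list k M)) {ys. \<forall>y\<in>set ys. P y} \<partial>M)"
    by simp
  also have "\<dots> = (\<integral>\<^sup>+ y. indicator {y. P y} y * ennreal (measure_pmf.prob M {y. P y} ^ k) \<partial>M)"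
    by (intro nn_integral_cong) (simp add: pre Suc indicator_def emeasure_map_pmf)
  also have "\<dots> = emeasure M {y. P y} * ennreal (measure_pmf.prob M {y. P y} ^ k)"
    by (simp add: nn_integral_multc)
  also have "\<dots> = ennreal (measure_pmf.prob M {y. P y} ^ Suc k)"
    by (simp add: measure_pmf.emeasure_eq_measure ennreal_mult'[symmetric] mult.commute)
  finally show ?case .
qed

lemma prob_iid_all:
  "measure_pmf.prob (iid_list k M) {ys. \<forall>y\<in>set ys. P y} = measure_pmf.prob M {y. P y} ^ k"
  using emeasure_iid_all[of k M P] by (simp add: measure_pmf.emeasure_eq_measure)

lemma select_best_set:
  assumes "ys \<noteq> []" "y \<in> set_pmf (select_best f ys)"
  shows "y \<in> set ys \<and> (\<forall>z\<in>set ys. f z \<le> f y)"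
proof -
  define S where "S = {i. i < length ys \<and> (\<forall>j < length ys. f (ys ! j) \<le> f (ys ! i))}"
  have fin: "finite S" by (simp add: S_def)
  obtain z where z: "z \<in> set ys" "\<forall>w\<in>set ys. f w \<le> f z"
  proof -
    have "finite (f ` set ys)" "f ` set ys \<noteq> {}" using assms(1) by auto
    then have "Max (f ` set ys) \<in> f ` set ys" by (rule Max_in)
    then obtain z where "z \<in> set ys" "f z = Max (f ` set ys)" by auto
    then show ?thesis using that by (simp add: \<open>finite (f ` set ys)\<close>)
  qed
  obtain i where i: "i < length ys" "ys ! i = z" using z(1) by (auto simp: in_set_conv_nth)
  have "i \<in> S" using i z(2) by (auto simp: S_def)
  then have ne: "S \<noteq> {}" by auto
  from assms(2) obtain i' where "i' \<in> S" "y = ys ! i'"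
    by (auto simp: select_best_def S_def[symmetric] set_pmf_of_set[OF ne fin])
  then show ?thesis by (auto simp: S_def in_set_conv_nth)
qed

lemma std_set_len: "y \<in> set_pmf (std_bit_mut p x) \<Longrightarrow> length y = length x"
  by (induction x arbitrary: y) auto

lemma std_set_full:
  assumes "0 < p" "p < 1"
  shows "set_pmf (std_bit_mut p x) = {y. length y = length x}"
proof (induction x)
  case Nil then show ?case by auto
next
  case (Cons b bs)
  show ?case
  proof (rule set_eqI, rule iffI)
    fix y assume "y \<in> set_pmf (std_bit_mut p (b # bs))"
    then show "y \<in> {y. length y = length (b # bs)}" using std_set_len by blast
  next
    fix y :: "bool list" assume y: "y \<in> {y. length y = length (b # bs)}"
    then obtain h r where hr: "y = h # r" "length r = length bs" by (cases y) auto
    have "r \<in> set_pmf (std_bit_mut p bs)" using Cons hr by auto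
    moreover have "(if (h \<noteq> b) then \<not> b else b) = h" by auto
    ultimately show "y \<in> set_pmf (std_bit_mut p (b # bs))" using assms hr
      by (auto intro!: bexI[of _ "h \<noteq> b"])
  qed
qed

lemma std_clone:
  assumes "0 \<le> p" "p \<le> 1"
  shows "pmf (std_bit_mut p x) x = (1 - p) ^ length x"
proof (induction x)
  case Nil then show ?case by simp
next
  case (Cons b bs)
  have z: "pmf (map_pmf (Cons (\<not> b)) (std_bit_mut p bs)) (b # bs) = 0"
    by (auto simp: pmf_eq_0_set_pmf)
  have o: "pmf (map_pmf (Cons b) (std_bit_mut p bs)) (b # bs) = pmf (std_bit_mut p bs) bs"
    by (rule pmf_map_inj') (auto simp: inj_def)
  have "pmf (std_bit_mut p (b # bs)) (b # bs)
      = pmf (map_pmf (\<lambda>r. (\<not> b) # r) (std_bit_mut p bs)) (b # bs) * p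
        + pmf (map_pmf (\<lambda>r. b # r) (std_bit_mut p bs)) (b # bs) * (1 - p)"
    using assms by (simp add: pmf_bind)
  also have "\<dots> = (1 - p) ^ length (b # bs)" using z o Cons by simp
  finally show ?case .
qed


lemma power_law_facts:
  assumes n: "2 \<le> n"
  shows "pmf (power_law_pmf n \<beta>) i = (if 1 \<le> i \<and> i \<le> n div 2
      then real i powr (-\<beta>) / (\<Sum>j=1..n div 2. real j powr (-\<beta>)) else 0)"
proof -
  define Z where "Z = (\<Sum>j=1..n div 2. real j powr (-\<beta>))"
  define g where "g i = (if 1 \<le> i \<and> i \<le> n div 2 then real i powr (-\<beta>) / Z else 0)" for i
  have m1: "1 \<le> n div 2" using n by auto
  have Zpos: "Z > 0" unfolding Z_def
    by (rule sum_pos) (use m1 in auto)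
  have nonneg: "0 \<le> g i" for i using Zpos by (simp add: g_def)
  have "(\<integral>\<^sup>+x. ennreal (g x) \<partial>count_space UNIV) = (\<Sum>x\<in>{1..n div 2}. ennreal (g x))"
    by (rule nn_integral_count_space') (auto simp: g_def)
  also have "\<dots> = ennreal (\<Sum>x\<in>{1..n div 2}. g x)"
    by (rule sum_ennreal) (simp add: nonneg)
  also have "(\<Sum>x\<in>{1..n div 2}. g x) = (\<Sum>x\<in>{1..n div 2}. real x powr (-\<beta>)) / Z"
    by (simp add: g_def sum_divide_distrib)
  also have "\<dots> = 1" using Zpos by (simp add: Z_def)
  finally have prob: "(\<integral>\<^sup>+x. ennreal (g x) \<partial>count_space UNIV) = 1" by simp
  have "pmf (embed_pmf g) i = g i"
    by (rule pmf_embed_pmf[OF nonneg prob])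
  moreover have "power_law_pmf n \<beta> = embed_pmf g"
    unfolding power_law_pmf_def g_def[abs_def] Z_def by (rule refl)
  ultimately show ?thesis by (simp add: g_def Z_def)
qed

lemma power_law_set: "2 \<le> n \<Longrightarrow> set_pmf (power_law_pmf n \<beta>) \<subseteq> {1..n div 2}"
  by (auto simp: set_pmf_eq power_law_facts split: if_splits)

lemma power_law_one:
  assumes "2 \<le> n" "1 < \<beta>"
  shows "pmf (power_law_pmf n \<beta>) 1 \<ge> 1 / (\<Sum>j. real j powr (-\<beta>))"
proof -
  have m1: "1 \<le> n div 2" using assms by auto
  have summ: "summable (\<lambda>j. real j powr (-\<beta>))" using assms by (simp add: summable_real_powr_iff)
  have Zpos: "(\<Sum>j=1..n div 2. real j powr (-\<beta>)) > 0"
    by (rule sum_pos) (use m1 in auto)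
  have "(\<Sum>j=1..n div 2. real j powr (-\<beta>)) \<le> (\<Sum>j. real j powr (-\<beta>))"
    by (rule sum_le_suminf[OF summ]) auto
  then have "1 / (\<Sum>j. real j powr (-\<beta>)) \<le> 1 / (\<Sum>j=1..n div 2. real j powr (-\<beta>))"
    using Zpos by (intro divide_left_mono) auto
  then show ?thesis using assms m1 by (simp add: power_law_facts)
qed

lemma heavy_pmf_ge:
  assumes "2 \<le> length x"
  shows "pmf (heavy_tailed_mut \<beta> x) y \<ge> pmf (std_bit_mut (1 / real (length x)) x) y * pmf (power_law_pmf (length x) \<beta>) 1"
proof -
  let ?n = "length x"
  have "pmf (heavy_tailed_mut \<beta> x) y = (\<integral>chi. pmf (std_bit_mut (real chi / real ?n) x) y \<partial>power_law_pmf ?n \<beta>)"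
    by (simp add: heavy_tailed_mut_def pmf_bind)
  also have "\<dots> = (\<Sum>chi\<in>{1..?n div 2}. pmf (std_bit_mut (real chi / real ?n) x) y * pmf (power_law_pmf ?n \<beta>) chi)"
    by (rule integral_measure_pmf_real) (use power_law_set[OF assms, of \<beta>] in force)+
  also have "\<dots> \<ge> pmf (std_bit_mut (real 1 / real ?n) x) y * pmf (power_law_pmf ?n \<beta>) 1"
    by (rule member_le_sum[where f = "\<lambda>chi. pmf (std_bit_mut (real chi / real ?n) x) y * pmf (power_law_pmf ?n \<beta>) chi"])
       (use assms in auto)
  finally show ?thesis by simp
qed



definition Wf :: "real \<Rightarrow> real \<Rightarrow> real \<Rightarrow> real \<Rightarrow> real" where
  "Wf \<theta> K \<Lambda> \<mu> = (if \<mu> < \<Lambda> then K * exp (- \<theta> * (ln (max 1 \<mu>))\<^sup>2) else 0)"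

definition Gf :: "real \<Rightarrow> real \<Rightarrow> real \<Rightarrow> real" where
  "Gf F L \<mu> = max 0 (L - log F (max 1 \<mu>))"

lemma Wf_nonneg: "K \<ge> 0 \<Longrightarrow> Wf \<theta> K \<Lambda> \<mu> \<ge> 0"
  by (simp add: Wf_def)

lemma Wf_le_K: "K \<ge> 0 \<Longrightarrow> \<theta> \<ge> 0 \<Longrightarrow> Wf \<theta> K \<Lambda> \<mu> \<le> K"
  by (simp add: Wf_def mult_left_le)

lemma Wf_up:
  assumes "K \<ge> 0" "\<theta> > 0" "u > 1" "lam \<ge> 1"
  shows "Wf \<theta> K \<Lambda> (u * lam) \<le> exp (- \<theta> * (ln u)\<^sup>2) * Wf \<theta> K \<Lambda> lam"
proof (cases "u * lam < \<Lambda>")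
  case True
  have ul: "1 * lam \<le> u * lam" using assms by (intro mult_right_mono) auto
  then have lt: "lam < \<Lambda>" using True by simp
  have a: "ln u \<ge> 0" "ln lam \<ge> 0" using assms by auto
  have m: "max 1 (u * lam) = u * lam" by (rule max_absorb2) (use ul assms in linarith)
  have m2: "max 1 lam = lam" using assms by simp
  have l: "ln (u * lam) = ln u + ln lam" using assms by (simp add: ln_mult)
  have "(ln u + ln lam)\<^sup>2 \<ge> (ln u)\<^sup>2 + (ln lam)\<^sup>2" using a
    by (simp add: power2_sum)
  then have "\<theta> * ((ln u)\<^sup>2 + (ln lam)\<^sup>2) \<le> \<theta> * (ln u + ln lam)\<^sup>2"
    using assms by (intro mult_left_mono) auto
  then have "- \<theta> * (ln (max 1 (u * lam)))\<^sup>2 \<le> - \<theta> * (ln u)\<^sup>2 + - \<theta> * (ln (max 1 lam))\<^sup>2"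
    unfolding m m2 l by (simp add: algebra_simps)
  then have "exp (- \<theta> * (ln (max 1 (u * lam)))\<^sup>2) \<le> exp (- \<theta> * (ln u)\<^sup>2) * exp (- \<theta> * (ln (max 1 lam))\<^sup>2)"
    by (simp add: exp_add[symmetric])
  then show ?thesis using True lt assms(1)
    by (simp add: Wf_def mult_left_mono algebra_simps)
next
  case False
  then show ?thesis using assms by (simp add: Wf_def)
qed

lemma Wf_down:
  assumes "K \<ge> 0" "F > 1" "\<theta> = 1 / (2 * ln F)" "lam \<ge> 1" "lam < \<Lambda>"
  shows "Wf \<theta> K \<Lambda> (max 1 (lam / F)) \<le> lam * Wf \<theta> K \<Lambda> lam"
proof -
  have lnF: "ln F > 0" using assms by simp
  have "lam * 1 \<le> lam * F" using assms by (intro mult_left_mono) auto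
  then have "lam / F \<le> lam" using assms by (simp add: divide_le_eq)
  then have mlt: "max 1 (lam / F) < \<Lambda>" using assms by simp
  have key: "\<theta> * (ln (max 1 (lam / F)))\<^sup>2 \<ge> \<theta> * (ln lam)\<^sup>2 - ln lam"
  proof (cases "lam / F \<ge> 1")
    case True
    then have "ln (max 1 (lam / F)) = ln lam - ln F" using assms by (simp add: ln_div)
    moreover have "(ln lam - ln F)\<^sup>2 \<ge> (ln lam)\<^sup>2 - 2 * ln lam * ln F"
      by (simp add: power2_diff)
    moreover have "2 * \<theta> * ln F = 1" using assms lnF by simp
    moreover have "\<theta> > 0" using assms lnF by simp
    ultimately have "\<theta> * (ln (max 1 (lam / F)))\<^sup>2 \<ge> \<theta> * ((ln lam)\<^sup>2 - 2 * ln lam * ln F)"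
      by (metis mult_left_mono less_imp_le)
    also have "\<theta> * ((ln lam)\<^sup>2 - 2 * ln lam * ln F) = \<theta> * (ln lam)\<^sup>2 - ln lam * (2 * \<theta> * ln F)"
      by (simp add: algebra_simps)
    finally show ?thesis using \<open>2 * \<theta> * ln F = 1\<close> by simp
  next
    case False
    then have "lam < F" using assms by (simp add: field_simps)
    then have l: "ln lam \<le> ln F" "0 \<le> ln lam" using assms by auto
    have "\<theta> * (ln lam)\<^sup>2 = ln lam * (ln lam / (2 * ln F))"
      using assms by (simp add: power2_eq_square)
    also have "\<dots> \<le> ln lam * 1" using l lnF
      by (intro mult_left_mono) auto
    finally show ?thesis using False by simp
  qed
  have "exp (- \<theta> * (ln (max 1 (lam / F)))\<^sup>2) \<le> exp (ln lam + - \<theta> * (ln lam)\<^sup>2)"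
    using key by simp
  also have "\<dots> = exp (ln lam) * exp (- \<theta> * (ln lam)\<^sup>2)" by (rule exp_add)
  also have "\<dots> = lam * exp (- \<theta> * (ln (max 1 lam))\<^sup>2)"
    using assms by (simp add: max_absorb2)
  finally show ?thesis using mlt assms
    by (simp add: Wf_def mult_left_mono algebra_simps)
qed


lemma Gf_nonneg: "Gf F L mu \<ge> 0" by (simp add: Gf_def)

lemma Gf_down:
  assumes "F > 1" "lam \<ge> 1"
  shows "Gf F L (max 1 (lam / F)) \<le> Gf F L lam + 1"
proof -
  have "log F (max 1 (lam / F)) \<ge> log F lam - 1"
  proof (cases "lam / F \<ge> 1")
    case True
    then have "max 1 (lam / F) = lam / F" by simp
    moreover have "log F (lam / F) = log F lam - 1" using assms by (simp add: log_divide)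
    ultimately show ?thesis by simp
  next
    case False
    then have "lam < F" using assms by (simp add: field_simps)
    then have "log F lam < 1" using assms by (subst log_less_one_cancel_iff) auto
    then show ?thesis using False by simp
  qed
  then show ?thesis using assms by (simp add: Gf_def max_def)
qed

lemma Gf_up:
  assumes "F > 1" "lam \<ge> 1" "u \<ge> 1"
  shows "Gf F L (u * lam) \<le> Gf F L lam"
proof -
  have ul: "1 * lam \<le> u * lam" using assms by (intro mult_right_mono) auto
  have "log F lam \<le> log F (u * lam)" using assms ul by simp
  have m1: "max 1 (u * lam) = u * lam" using ul assms by linarith
  have m2: "max 1 lam = lam" using assms by linarith
  show ?thesis unfolding Gf_def m1 m2 using \<open>log F lam \<le> log F (u * lam)\<close>
    by (intro max.mono) auto
qed

lemma Gf_up_strict: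
  assumes "F > 1" "s > 0" "lam \<ge> 1" "pmn > 0" "lam \<le> 2 / pmn"
    and u: "u = F powr (1 / s)" and L: "L = log F (2 * u / pmn)"
  shows "Gf F L (u * lam) \<le> Gf F L lam - 1 / s"
proof -
  have upos: "u > 0" using u assms by simp
  have lu: "log F u = 1 / s" using u assms by (simp add: log_powr)
  have l1: "log F (u * lam) = 1 / s + log F lam" using lu upos assms by (simp add: log_mult)
  have "pmn * lam \<le> 2" using assms by (simp add: field_simps)
  then have "log F (pmn * lam) \<le> log F 2" using assms by simp
  have "L = log F 2 + log F u - log F pmn" using L assms upos by (simp add: log_mult log_divide)
  then have "L - log F (u * lam) = log F 2 - log F pmn - log F lam" using l1 lu by simp
  also have "\<dots> = log F 2 - log F (pmn * lam)" using assms by (simp add: log_mult)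
  finally have ge: "L - log F (u * lam) \<ge> 0" using \<open>log F (pmn * lam) \<le> log F 2\<close> by simp
  have "u > 1" unfolding u using assms by (intro gr_one_powr) auto
  then have "1 * lam \<le> u * lam" using assms(3) by (intro mult_right_mono) auto
  then have "u * lam \<ge> 1" using assms by linarith
  then have m1: "max 1 (u * lam) = u * lam" by linarith
  have m2: "max 1 lam = lam" using assms by linarith
  have a1: "max 0 (L - log F lam) \<ge> L - log F lam" by simp
  have a2: "max 0 (L - log F (u * lam)) = L - log F (u * lam)" using ge by simp
  show ?thesis unfolding Gf_def m1 m2 using a1 a2 l1 by linarith
qed


lemma exp_m1_le: "exp (- 1::real) \<le> 1 / 2"
proof -
  have e: "2 \<le> exp (1::real)" using exp_ge_add_one_self[of "1::real"] by simp
  have "exp (1::real) * exp (- 1) = 1" by (simp add: exp_minus_inverse)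
  moreover have "2 * exp (- 1::real) \<le> exp 1 * exp (- 1)" using e by (intro mult_right_mono) auto
  ultimately show ?thesis by simp
qed

lemma drift_real:
  fixes F s c K \<Lambda> Pm pmn d lam q rho u \<theta> \<kappa> L A B :: real and k :: nat
  assumes F: "F > 1" and s: "s > 0" and c: "0 < c" "c < 1" and K: "K \<ge> 0"
    and u: "u = F powr (1 / s)" and th: "\<theta> = 1 / (2 * ln F)"
    and ka: "\<kappa> = 1 - exp (- \<theta> * (ln u)\<^sup>2)"
    and L: "L = log F (2 * u / pmn)" and A: "A = 2 * s + 4" and B: "B = 2 * s"
    and Kb: "\<And>mu. mu \<ge> 1 \<Longrightarrow> (1 - c) powr (mu / 2) \<le> \<kappa> * K * exp (- \<theta> * (ln mu)\<^sup>2) / 4"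
    and La: "\<Lambda> \<ge> F" and LP: "\<Lambda>\<^sup>2 * Pm \<le> \<kappa> / 16" and d: "d \<ge> 0"
    and eta: "2 * K * d * exp (- \<theta> * (ln (\<Lambda> / F))\<^sup>2) \<le> 1 / (2 * s + 4)"
    and lam: "lam \<ge> 1" and k1: "lam / 2 \<le> real k" and k2: "real k \<le> 2 * lam"
    and q: "0 < pmn" "pmn \<le> q" "q \<le> Pm"
    and rho: "0 \<le> rho" "rho \<le> (1 - c) ^ k"
  shows "- A * (1 - (1 - q) ^ k) + A * d * rho
         + (1 - (1 - q) ^ k) * (B * Gf F L (max 1 (lam / F)) + A * d * Wf \<theta> K \<Lambda> (max 1 (lam / F)))
         + (1 - q) ^ k * (B * Gf F L (u * lam) + A * d * Wf \<theta> K \<Lambda> (u * lam)) + 1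
         \<le> B * Gf F L lam + A * d * Wf \<theta> K \<Lambda> lam"
proof -
  define Ps where "Ps = 1 - (1 - q) ^ k"
  define G0 where "G0 = Gf F L lam"
  define G1 where "G1 = Gf F L (max 1 (lam / F))"
  define G2 where "G2 = Gf F L (u * lam)"
  define W0 where "W0 = Wf \<theta> K \<Lambda> lam"
  define W1 where "W1 = Wf \<theta> K \<Lambda> (max 1 (lam / F))"
  define W2 where "W2 = Wf \<theta> K \<Lambda> (u * lam)"
  have u1: "u > 1" unfolding u using F s by (intro gr_one_powr) auto
  have lnF: "ln F > 0" using F by simp
  have thp: "\<theta> > 0" using th lnF by simp
  have lnu: "ln u > 0" using u1 by simp
  have kap: "0 < \<kappa>" "\<kappa> \<le> 1" using ka thp lnu by auto
  have Pm1: "Pm \<le> \<kappa> / 16"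
  proof -
    have "1 \<le> \<Lambda>\<^sup>2" using La F by (simp add: one_le_power)
    then have "1 * Pm \<le> \<Lambda>\<^sup>2 * Pm" using q by (intro mult_right_mono) auto
    then show ?thesis using LP by simp
  qed
  have q1: "q \<le> 1" using q Pm1 kap by linarith
  have qk: "0 \<le> (1 - q) ^ k" "(1 - q) ^ k \<le> 1" using q q1 by (auto intro: power_le_one)
  have Ps01: "0 \<le> Ps" "Ps \<le> 1" using qk by (auto simp: Ps_def)
  have Psle: "Ps \<le> real k * q"
    using Bernoulli_inequality[of "- q" k] q q1 by (simp add: Ps_def)
  have Psle2: "Ps \<le> 2 * lam * Pm"
  proof -
    have "real k * q \<le> (2 * lam) * Pm" using k2 q by (intro mult_mono) auto
    then show ?thesis using Psle by simp
  qed
  have rho2: "rho \<le> (1 - c) powr (lam / 2)"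
  proof -
    have "(1 - c) ^ k = (1 - c) powr (real k)" using c by (simp add: powr_realpow)
    also have "\<dots> \<le> (1 - c) powr (lam / 2)" using c k1 by (intro powr_mono') auto
    finally show ?thesis using rho by simp
  qed
  have W0n: "W0 \<ge> 0" "W1 \<ge> 0" "W2 \<ge> 0" using K by (auto simp: W0_def W1_def W2_def Wf_nonneg)
  have Gpart: "- A * Ps + Ps * (B * G1) + (1 - Ps) * (B * G2) \<le> B * G0 - 2"
  proof -
    have g1: "G1 \<le> G0 + 1" using Gf_down[OF F lam] by (simp add: G0_def G1_def)
    have g2: "G2 \<le> G0" using Gf_up[OF F lam] u1 by (simp add: G0_def G2_def)
    have Bn: "B \<ge> 0" using B s by simp
    have t1: "Ps * (B * G1) \<le> Ps * (B * (G0 + 1))" using g1 Bn Ps01 by (intro mult_left_mono) auto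
    show ?thesis
    proof (cases "lam \<le> 2 / pmn")
      case True
      have "G2 \<le> G0 - 1 / s" using Gf_up_strict[OF F s lam q(1) True u L] by (simp add: G0_def G2_def)
      then have e0: "(1 - Ps) * (B * G2) \<le> (1 - Ps) * (B * (G0 - 1 / s))" using Bn Ps01
        by (intro mult_left_mono) auto
      have bb: "B * (G0 - 1 / s) = B * G0 - 2" using B s by (simp add: right_diff_distrib)
      have "(1 - Ps) * (B * G0 - 2) = (1 - Ps) * (B * G0) - 2 * (1 - Ps)"
        by (simp add: right_diff_distrib mult.commute)
      then have e1: "(1 - Ps) * (B * G2) \<le> (1 - Ps) * (B * G0) - 2 * (1 - Ps)"
        using e0 unfolding bb by linarith
      have "- A * Ps + Ps * (B * G1) + (1 - Ps) * (B * G2)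
          \<le> - A * Ps + Ps * (B * (G0 + 1)) + ((1 - Ps) * (B * G0) - 2 * (1 - Ps))"
        using t1 e1 by linarith
      also have "\<dots> = B * G0 - 2 - 2 * Ps" using A B by (simp add: algebra_simps)
      finally show ?thesis using Ps01 by linarith
    next
      case False
      have "real k * q \<ge> (lam / 2) * pmn" using k1 q by (intro mult_mono) auto
      moreover have "(lam / 2) * pmn > 1"
      proof -
        have "2 / pmn < lam" using False by simp
        then have "2 < lam * pmn" using q(1) by (simp add: divide_less_eq)
        then show ?thesis by simp
      qed
      ultimately have kq: "real k * q \<ge> 1" by linarith
      have "1 + (- q) \<le> exp (- q)" by (rule exp_ge_add_one_self)
      then have "(1 - q) ^ k \<le> exp (- q) ^ k"
        using q q1 by (intro power_mono) auto
      also have "\<dots> = exp (real k * (- q))" by (rule exp_of_nat_mult[symmetric])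
      also have "\<dots> = exp (- (real k * q))" by simp
      also have "\<dots> \<le> exp (- 1)" using kq by simp
      also have "\<dots> \<le> 1 / 2" by (rule exp_m1_le)
      finally have "(1 - q) ^ k \<le> 1 / 2" .
      then have Ph: "Ps \<ge> 1 / 2" unfolding Ps_def by linarith
      have "(1 - Ps) * (B * G2) \<le> (1 - Ps) * (B * G0)" using g2 Bn Ps01
        by (intro mult_left_mono) auto
      have "- A * Ps + Ps * (B * G1) + (1 - Ps) * (B * G2)
          \<le> - A * Ps + Ps * (B * (G0 + 1)) + (1 - Ps) * (B * G0)"
        using t1 \<open>(1 - Ps) * (B * G2) \<le> (1 - Ps) * (B * G0)\<close> by linarith
      also have "\<dots> = B * G0 - 4 * Ps" using A B by (simp add: algebra_simps)
      finally show ?thesis using Ph by linarith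
    qed
  qed
  have Wpart: "A * d * rho + Ps * (A * d * W1) + (1 - Ps) * (A * d * W2) \<le> A * d * W0 + 1"
  proof (cases "lam < \<Lambda>")
    case True
    have w1: "W1 \<le> lam * W0" unfolding W0_def W1_def by (rule Wf_down[OF K F th lam True])
    have w2: "W2 \<le> (1 - \<kappa>) * W0" unfolding W0_def W2_def ka using Wf_up[OF K thp u1 lam] by simp
    have W0e: "W0 = K * exp (- \<theta> * (ln lam)\<^sup>2)" using True lam by (simp add: W0_def Wf_def)
    have r: "rho \<le> \<kappa> * W0 / 4" using rho2 Kb[OF lam] W0e by (simp add: mult.assoc)
    have "lam\<^sup>2 \<le> \<Lambda>\<^sup>2" using lam True by (intro power_mono) auto
    then have "lam\<^sup>2 * Pm \<le> \<Lambda>\<^sup>2 * Pm" using q by (intro mult_right_mono) auto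
    then have lP: "lam * lam * Pm \<le> \<kappa> / 16" using LP by (simp add: power2_eq_square)
    have "Ps * W1 \<le> (2 * lam * Pm) * (lam * W0)" using Psle2 w1 Ps01 W0n q lam by (intro mult_mono) auto
    also have "\<dots> = 2 * (lam * lam * Pm) * W0" by (simp add: algebra_simps)
    also have "\<dots> \<le> 2 * (\<kappa> / 16) * W0" using lP W0n by (intro mult_right_mono) auto
    finally have p1: "Ps * W1 \<le> \<kappa> * W0 / 8" by simp
    have "(1 - Ps) * W2 \<le> 1 * ((1 - \<kappa>) * W0)" using w2 Ps01 W0n by (intro mult_mono) auto
    then have p2: "(1 - Ps) * W2 \<le> (1 - \<kappa>) * W0" by simp
    have kw: "\<kappa> * W0 \<ge> 0" using kap W0n by simp
    have "(1 - \<kappa>) * W0 = W0 - \<kappa> * W0" by (simp add: algebra_simps)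
    then have "rho + Ps * W1 + (1 - Ps) * W2 \<le> W0" using r p1 p2 kw by linarith
    then have "A * d * (rho + Ps * W1 + (1 - Ps) * W2) \<le> A * d * W0"
      using A d s by (intro mult_left_mono) auto
    then show ?thesis by (simp add: algebra_simps)
  next
    case False
    have W0z: "W0 = 0" using False by (simp add: W0_def Wf_def)
    have ul: "1 * lam \<le> u * lam" using u1 lam by (intro mult_right_mono) auto
    have W2z: "W2 = 0" using False ul by (simp add: W2_def Wf_def)
    define E where "E = K * exp (- \<theta> * (ln (\<Lambda> / F))\<^sup>2)"
    have LF1: "\<Lambda> / F \<ge> 1" using La F by simp
    have w1: "W1 \<le> E"
    proof (cases "max 1 (lam / F) < \<Lambda>")
      case True
      have "lam / F \<ge> \<Lambda> / F" using False F by (simp add: divide_right_mono)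
      then have m: "max 1 (lam / F) \<ge> \<Lambda> / F" by simp
      have "ln (\<Lambda> / F) \<le> ln (max 1 (lam / F))" using m LF1 by simp
      moreover have "0 \<le> ln (\<Lambda> / F)" using LF1 by simp
      ultimately have "(ln (\<Lambda> / F))\<^sup>2 \<le> (ln (max 1 (lam / F)))\<^sup>2" by (intro power_mono) auto
      then have "- \<theta> * (ln (max 1 (max 1 (lam / F))))\<^sup>2 \<le> - \<theta> * (ln (\<Lambda> / F))\<^sup>2"
        using thp by simp
      then show ?thesis using True K by (simp add: W1_def Wf_def E_def mult_left_mono)
    next
      case False
      then have "W1 = 0" unfolding W1_def Wf_def by (rule if_not_P)
      moreover have "E \<ge> 0" using K by (simp add: E_def)
      ultimately show ?thesis by simp
    qed
    have r: "rho \<le> E"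
    proof -
      have L1: "\<Lambda> \<ge> 1" using La F by simp
      have "(1 - c) powr (lam / 2) \<le> (1 - c) powr (\<Lambda> / 2)"
        using False c by (intro powr_mono') auto
      then have "rho \<le> (1 - c) powr (\<Lambda> / 2)" using rho2 by linarith
      also have "\<dots> \<le> \<kappa> * K * exp (- \<theta> * (ln \<Lambda>)\<^sup>2) / 4" using Kb[OF L1] .
      also have "\<dots> \<le> K * exp (- \<theta> * (ln \<Lambda>)\<^sup>2)"
      proof -
        have "\<kappa> * (K * exp (- \<theta> * (ln \<Lambda>)\<^sup>2)) \<le> 1 * (K * exp (- \<theta> * (ln \<Lambda>)\<^sup>2))"
          using kap K by (intro mult_right_mono) auto
        moreover have "0 \<le> K * exp (- \<theta> * (ln \<Lambda>)\<^sup>2)" using K by simp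
        moreover have "\<kappa> * K * exp (- \<theta> * (ln \<Lambda>)\<^sup>2) = \<kappa> * (K * exp (- \<theta> * (ln \<Lambda>)\<^sup>2))"
          by (simp add: mult.assoc)
        ultimately show ?thesis by linarith
      qed
      also have "\<dots> \<le> E"
      proof -
        have "ln (\<Lambda> / F) \<le> ln \<Lambda>" using LF1 F by (simp add: ln_div)
        moreover have "0 \<le> ln (\<Lambda> / F)" using LF1 by simp
        ultimately have "(ln (\<Lambda> / F))\<^sup>2 \<le> (ln \<Lambda>)\<^sup>2" by (intro power_mono) auto
        then have "exp (- \<theta> * (ln \<Lambda>)\<^sup>2) \<le> exp (- \<theta> * (ln (\<Lambda> / F))\<^sup>2)" using thp by simp
        then show ?thesis using K by (simp add: E_def mult_left_mono)
      qed
      finally show ?thesis .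
    qed
    have "rho + Ps * W1 \<le> 2 * E"
    proof -
      have "Ps * W1 \<le> 1 * E" using Ps01 w1 W0n by (intro mult_mono) (auto simp: E_def)
      then show ?thesis using r by simp
    qed
    then have "A * d * (rho + Ps * W1) \<le> A * d * (2 * E)" using A d s by (intro mult_left_mono) auto
    also have "A * d * (2 * E) = A * (2 * K * d * exp (- \<theta> * (ln (\<Lambda> / F))\<^sup>2))"
      by (simp add: E_def algebra_simps)
    also have "\<dots> \<le> A * (1 / (2 * s + 4))" using eta A s by (intro mult_left_mono) auto
    also have "\<dots> = 1" using A s by simp
    finally have "A * d * (rho + Ps * W1) \<le> 1" .
    moreover have "A * d * (rho + Ps * W1) = A * d * rho + Ps * (A * d * W1)" by (simp add: algebra_simps)
    ultimately show ?thesis using W0z W2z by simp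
  qed
  have "- A * Ps + A * d * rho + Ps * (B * G1 + A * d * W1) + (1 - Ps) * (B * G2 + A * d * W2) + 1
      \<le> B * G0 + A * d * W0"
  proof -
    have "Ps * (B * G1 + A * d * W1) = Ps * (B * G1) + Ps * (A * d * W1)" by (rule distrib_left)
    moreover have "(1 - Ps) * (B * G2 + A * d * W2) = (1 - Ps) * (B * G2) + (1 - Ps) * (A * d * W2)"
      by (rule distrib_left)
    ultimately show ?thesis using Gpart Wpart by linarith
  qed
  then show ?thesis unfolding Ps_def G0_def G1_def G2_def W0_def W1_def W2_def by simp
qed




definition PhiF :: "(bool list \<Rightarrow> nat) \<Rightarrow> nat \<Rightarrow> real \<Rightarrow> real \<Rightarrow> real \<Rightarrow> real \<Rightarrow> real \<Rightarrow> real \<Rightarrow> real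
    \<Rightarrow> bool list \<times> real \<Rightarrow> real" where
  "PhiF f d F L \<theta> K \<Lambda> A B st = (if f (fst st) = d then 0 else
     A * real (d - f (fst st)) + (B * Gf F L (snd st) + A * real d * Wf \<theta> K \<Lambda> (snd st)))"

lemma round_bounds:
  assumes "lam \<ge> (1::real)"
  shows "lam / 2 \<le> real (nat (round lam))" "real (nat (round lam)) \<le> 2 * lam" "nat (round lam) \<ge> 1"
proof -
  have a: "lam - 1/2 \<le> of_int (round lam)" by (rule of_int_round_ge)
  have b: "of_int (round lam) \<le> lam + 1/2" by (rule of_int_round_le)
  have pos: "round lam \<ge> 0" using a assms by linarith
  then have e: "real (nat (round lam)) = of_int (round lam)" by simp
  show "lam / 2 \<le> real (nat (round lam))" using a assms e by linarith
  show "real (nat (round lam)) \<le> 2 * lam" using b assms e by linarith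
  have "of_int (round lam) \<ge> (1/2::real)" using a assms by linarith
  then have "round lam \<ge> 1" by linarith
  then show "nat (round lam) \<ge> 1" by linarith
qed

lemma finite_len_lists: "finite {y :: bool list. length y = n}"
proof -
  have "finite {xs :: bool list. set xs \<subseteq> UNIV \<and> length xs = n}"
    by (rule finite_lists_length_eq) simp
  then show ?thesis by simp
qed


lemma ea_step_drift:
  fixes F s c K \<Lambda> Pm pmn lam u \<theta> \<kappa> L A B :: real and mut :: "bool list \<Rightarrow> bool list pmf"
    and f :: "bool list \<Rightarrow> nat" and d n :: nat and x :: "bool list"
  assumes F: "F > 1" and s: "s > 0" and c: "0 < c" "c < 1" and K: "K \<ge> 0"
    and u: "u = F powr (1 / s)" and th: "\<theta> = 1 / (2 * ln F)"
    and ka: "\<kappa> = 1 - exp (- \<theta> * (ln u)\<^sup>2)"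
    and L: "L = log F (2 * u / pmn)" and A: "A = 2 * s + 4" and B: "B = 2 * s"
    and Kb: "\<And>mu. mu \<ge> 1 \<Longrightarrow> (1 - c) powr (mu / 2) \<le> \<kappa> * K * exp (- \<theta> * (ln mu)\<^sup>2) / 4"
    and La: "\<Lambda> \<ge> F" and LP: "\<Lambda>\<^sup>2 * Pm \<le> \<kappa> / 16"
    and eta: "2 * K * real d * exp (- \<theta> * (ln (\<Lambda> / F))\<^sup>2) \<le> 1 / (2 * s + 4)"
    and lam: "lam \<ge> 1" and lenx: "length x = n" and fx: "f x < d"
    and M1: "\<And>y. y \<in> set_pmf (mut x) \<Longrightarrow> length y = n"
    and fit: "\<And>y. length y = n \<Longrightarrow> f y \<le> d"
    and clone: "pmf (mut x) x \<ge> c"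
    and pmn: "0 < pmn" "pmn \<le> p_plus mut f x" and pmx: "p_plus mut f x \<le> Pm"
  shows "(\<integral>\<^sup>+ st'. ennreal (PhiF f d F L \<theta> K \<Lambda> A B st') \<partial>ea_step F s mut f (x, lam)) + 1
         \<le> ennreal (PhiF f d F L \<theta> K \<Lambda> A B (x, lam))"
proof -
  define k where "k = nat (round lam)"
  have k1: "lam / 2 \<le> real k" and k2: "real k \<le> 2 * lam" and kge: "k \<ge> 1"
    using round_bounds[OF lam] by (auto simp: k_def)
  define H where "H mu = B * Gf F L mu + A * real d * Wf \<theta> K \<Lambda> mu" for mu
  define lam1 where "lam1 = max 1 (lam / F)"
  define lam2 where "lam2 = F powr (1 / s) * lam"
  have lam2u: "lam2 = u * lam" by (simp add: lam2_def u)
  define newlam where "newlam y = (if f y > f x then lam1 else lam2)" for y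
  define q where "q = p_plus mut f x"
  define E1 where "E1 = {ys :: bool list list. \<exists>z\<in>set ys. f z > f x}"
  define E2 where "E2 = {ys :: bool list list. \<forall>z\<in>set ys. f z < f x}"
  define c0 where "c0 = A * real (d - f x) - A"
  define Psi where "Psi ys = c0 + A + H lam2 + (H lam1 - A - H lam2) * indicator E1 ys
      + A * real d * indicator E2 ys" for ys
  have Apos: "A > 0" using A s by simp
  have Bpos: "B \<ge> 0" using B s by simp
  have Hn: "H mu \<ge> 0" for mu
    unfolding H_def using Bpos Apos K by (intro add_nonneg_nonneg mult_nonneg_nonneg Gf_nonneg Wf_nonneg) auto
  have dfx: "real (d - f x) \<ge> 1" using fx by simp
  have c0n: "c0 \<ge> 0" using dfx Apos unfolding c0_def
    by (metis diff_ge_0_iff_ge mult.right_neutral mult_left_mono less_imp_le)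
  have PhiX: "PhiF f d F L \<theta> K \<Lambda> A B (x, lam) = A * real (d - f x) + H lam"
    using fx by (simp add: PhiF_def H_def)
  have ysupp: "ys \<noteq> [] \<and> (\<forall>z\<in>set ys. length z = n)" if "ys \<in> set_pmf (iid_list k (mut x))" for ys
    using set_iid[OF that] kge M1 by auto
  have pw: "PhiF f d F L \<theta> K \<Lambda> A B (y, newlam y) \<le> Psi ys"
    if ys: "ys \<in> set_pmf (iid_list k (mut x))" and y: "y \<in> set_pmf (select_best f ys)" for ys y
  proof -
    have ne: "ys \<noteq> []" and lens: "\<forall>z\<in>set ys. length z = n" using ysupp[OF ys] by auto
    have yb: "y \<in> set ys" "\<forall>z\<in>set ys. f z \<le> f y" using select_best_set[OF ne y] by auto
    have fyd: "f y \<le> d" using fit lens yb by auto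
    have e1: "ys \<in> E1 \<longleftrightarrow> f y > f x" using yb unfolding E1_def by (auto intro: le_less_trans)
    have e2: "ys \<in> E2 \<longleftrightarrow> f y < f x" using yb unfolding E2_def by (auto intro: le_less_trans)
    have ph: "PhiF f d F L \<theta> K \<Lambda> A B (y, newlam y) \<le> A * real (d - f y) + H (newlam y)"
      using Apos Hn by (simp add: PhiF_def H_def)
    show ?thesis
    proof (cases "f y > f x")
      case True
      have "real (d - f y) \<le> real (d - f x) - 1" using True fyd fx by linarith
      then have "A * real (d - f y) \<le> A * (real (d - f x) - 1)" using Apos by (intro mult_left_mono) auto
      moreover have "Psi ys = c0 + H lam1" using True e1 e2 by (simp add: Psi_def)
      ultimately show ?thesis using ph True by (simp add: newlam_def c0_def algebra_simps)
    next
      case False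
      show ?thesis
      proof (cases "f y = f x")
        case True
        have "Psi ys = c0 + A + H lam2" using True e1 e2 by (simp add: Psi_def)
        then show ?thesis using ph True by (simp add: newlam_def c0_def)
      next
        case False2: False
        then have lt: "f y < f x" using False by simp
        have "real (d - f y) \<le> real d" by simp
        then have "A * real (d - f y) \<le> A * real d" using Apos by (intro mult_left_mono) auto
        moreover have "Psi ys = c0 + A + H lam2 + A * real d" using lt e1 e2 by (simp add: Psi_def)
        moreover have "c0 + A \<ge> 0" using c0n Apos by simp
        ultimately show ?thesis using ph lt by (simp add: newlam_def)
      qed
    qed
  qed
  have Psin: "Psi ys \<ge> 0" for ys
  proof (cases "ys \<in> E1")
    case True
    then show ?thesis using c0n Hn Apos by (simp add: Psi_def)
  next
    case False
    then show ?thesis using c0n Hn Apos by (simp add: Psi_def)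
  qed
  have fin_mut: "finite (set_pmf (mut x))"
    by (rule finite_subset[OF _ finite_len_lists[of n]]) (auto dest: M1)
  have fin_iid: "finite (set_pmf (iid_list k (mut x)))"
  proof -
    have "set_pmf (iid_list k (mut x)) \<subseteq> {xs. set xs \<subseteq> set_pmf (mut x) \<and> length xs = k}"
      using set_iid by blast
    then show ?thesis by (rule finite_subset) (rule finite_lists_length_eq[OF fin_mut])
  qed
  have integ: "integrable (measure_pmf (iid_list k (mut x))) g" for g :: "_ \<Rightarrow> real"
    by (rule integrable_measure_pmf_finite[OF fin_iid])
  define P1 where "P1 = measure_pmf.prob (iid_list k (mut x)) E1"
  define P2 where "P2 = measure_pmf.prob (iid_list k (mut x)) E2"
  have intPsi: "(\<integral>ys. Psi ys \<partial>iid_list k (mut x)) = c0 + A + H lam2 + (H lam1 - A - H lam2) * P1 + A * real d * P2"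
    unfolding Psi_def P1_def P2_def
    by (simp add: integ integral_add integral_mult_right)
  have P1e: "P1 = 1 - (1 - q) ^ k"
  proof -
    have "E1 = UNIV - {ys. \<forall>z\<in>set ys. f z \<le> f x}" by (auto simp: E1_def not_le)
    then have "P1 = 1 - measure_pmf.prob (iid_list k (mut x)) {ys. \<forall>z\<in>set ys. f z \<le> f x}"
      using measure_pmf.prob_compl[where M="iid_list k (mut x)" and A="{ys. \<forall>z\<in>set ys. f z \<le> f x}"]
      by (simp add: P1_def)
    also have "measure_pmf.prob (iid_list k (mut x)) {ys. \<forall>z\<in>set ys. f z \<le> f x}
        = measure_pmf.prob (mut x) {z. f z \<le> f x} ^ k" by (rule prob_iid_all)
    also have "measure_pmf.prob (mut x) {z. f z \<le> f x} = 1 - q"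
    proof -
      have "{z. f z \<le> f x} = UNIV - {z. f z > f x}" by auto
      then show ?thesis
        using measure_pmf.prob_compl[where M="mut x" and A="{z. f z > f x}"]
        by (simp add: q_def p_plus_def)
    qed
    finally show ?thesis .
  qed
  have P2b: "0 \<le> P2" "P2 \<le> (1 - c) ^ k"
  proof -
    have "P2 = measure_pmf.prob (mut x) {z. f z < f x} ^ k" unfolding P2_def E2_def by (rule prob_iid_all)
    moreover have "measure_pmf.prob (mut x) {z. f z < f x} \<le> 1 - c"
    proof -
      have "measure_pmf.prob (mut x) ({z. f z < f x} \<union> {x}) \<le> 1" by simp
      moreover have "measure_pmf.prob (mut x) ({z. f z < f x} \<union> {x})
          = measure_pmf.prob (mut x) {z. f z < f x} + measure_pmf.prob (mut x) {x}"
        by (rule measure_pmf.finite_measure_Union) auto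
      moreover have "measure_pmf.prob (mut x) {x} = pmf (mut x) x" by (simp add: measure_pmf_single)
      ultimately show ?thesis using clone by linarith
    qed
    ultimately show "P2 \<le> (1 - c) ^ k" by (simp add: power_mono)
    show "0 \<le> P2" by (simp add: P2_def)
  qed
  have qb: "pmn \<le> q" "q \<le> Pm" using pmn pmx by (auto simp: q_def)
  have real_ineq: "- A * (1 - (1 - q) ^ k) + A * real d * P2
         + (1 - (1 - q) ^ k) * (B * Gf F L (max 1 (lam / F)) + A * real d * Wf \<theta> K \<Lambda> (max 1 (lam / F)))
         + (1 - q) ^ k * (B * Gf F L (u * lam) + A * real d * Wf \<theta> K \<Lambda> (u * lam)) + 1
         \<le> B * Gf F L lam + A * real d * Wf \<theta> K \<Lambda> lam"
    by (rule drift_real[OF F s c K u th ka L A B Kb La LP _ eta lam k1 k2 pmn(1) qb P2b]) simp_all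
  have main_real: "(\<integral>ys. Psi ys \<partial>iid_list k (mut x)) + 1 \<le> A * real (d - f x) + H lam"
  proof -
    have "(\<integral>ys. Psi ys \<partial>iid_list k (mut x)) = A * real (d - f x) + (- A * P1 + A * real d * P2
        + P1 * H lam1 + (1 - P1) * H lam2)"
      unfolding intPsi c0_def by (simp add: algebra_simps)
    moreover have "- A * P1 + A * real d * P2 + P1 * H lam1 + (1 - P1) * H lam2 + 1 \<le> H lam"
      using real_ineq unfolding P1e H_def lam1_def lam2u by simp
    ultimately show ?thesis by linarith
  qed
  have step_eq: "ea_step F s mut f (x, lam)
      = bind_pmf (iid_list k (mut x)) (\<lambda>ys. map_pmf (\<lambda>y. (y, newlam y)) (select_best f ys))"
    unfolding ea_step_def k_def newlam_def lam1_def lam2_def by simp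
  have "(\<integral>\<^sup>+ st'. ennreal (PhiF f d F L \<theta> K \<Lambda> A B st') \<partial>ea_step F s mut f (x, lam))
      = (\<integral>\<^sup>+ ys. (\<integral>\<^sup>+ y. ennreal (PhiF f d F L \<theta> K \<Lambda> A B (y, newlam y)) \<partial>select_best f ys)
           \<partial>iid_list k (mut x))"
    by (simp add: step_eq nn_integral_map_pmf)
  also have "\<dots> \<le> (\<integral>\<^sup>+ ys. ennreal (Psi ys) \<partial>iid_list k (mut x))"
  proof (rule nn_integral_mono_AE, rule AE_pmfI)
    fix ys assume ys: "ys \<in> set_pmf (iid_list k (mut x))"
    have "(\<integral>\<^sup>+ y. ennreal (PhiF f d F L \<theta> K \<Lambda> A B (y, newlam y)) \<partial>select_best f ys)
        \<le> (\<integral>\<^sup>+ y. ennreal (Psi ys) \<partial>select_best f ys)"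
      by (rule nn_integral_mono_AE, rule AE_pmfI) (use pw[OF ys] in \<open>simp add: ennreal_leI\<close>)
    also have "\<dots> = ennreal (Psi ys)" by (simp add: measure_pmf.emeasure_space_1)
    finally show "(\<integral>\<^sup>+ y. ennreal (PhiF f d F L \<theta> K \<Lambda> A B (y, newlam y)) \<partial>select_best f ys)
        \<le> ennreal (Psi ys)" .
  qed
  also have "\<dots> = ennreal (\<integral>ys. Psi ys \<partial>iid_list k (mut x))"
    by (rule nn_integral_eq_integral[OF integ]) (simp add: Psin)
  finally have le1: "(\<integral>\<^sup>+ st'. ennreal (PhiF f d F L \<theta> K \<Lambda> A B st') \<partial>ea_step F s mut f (x, lam))
      \<le> ennreal (\<integral>ys. Psi ys \<partial>iid_list k (mut x))" .
  have intn: "(\<integral>ys. Psi ys \<partial>iid_list k (mut x)) \<ge> 0" by (simp add: Psin)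
  have "ennreal (\<integral>ys. Psi ys \<partial>iid_list k (mut x)) + 1 = ennreal ((\<integral>ys. Psi ys \<partial>iid_list k (mut x)) + 1)"
    using intn by (simp add: ennreal_plus)
  also have "\<dots> \<le> ennreal (A * real (d - f x) + H lam)" using main_real by (rule ennreal_leI)
  finally show ?thesis using le1 PhiX
    by (metis add_right_mono order_trans)
qed


lemma core_bound:
  fixes F s c K \<Lambda> Pm pmn lam0 u \<theta> \<kappa> L A B :: real and mut :: "bool list \<Rightarrow> bool list pmf"
    and f :: "bool list \<Rightarrow> nat" and d n :: nat and x0 :: "bool list"
  assumes F: "F > 1" and s: "s > 0" and c: "0 < c" "c < 1" and K: "K \<ge> 0"
    and u: "u = F powr (1 / s)" and th: "\<theta> = 1 / (2 * ln F)"
    and ka: "\<kappa> = 1 - exp (- \<theta> * (ln u)\<^sup>2)"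
    and pmn_def: "pmn = p_min n mut f d"
    and L: "L = log F (2 * u / pmn)" and A: "A = 2 * s + 4" and B: "B = 2 * s"
    and Kb: "\<And>mu. mu \<ge> 1 \<Longrightarrow> (1 - c) powr (mu / 2) \<le> \<kappa> * K * exp (- \<theta> * (ln mu)\<^sup>2) / 4"
    and La: "\<Lambda> \<ge> F" and LP: "\<Lambda>\<^sup>2 * Pm \<le> \<kappa> / 16"
    and eta: "2 * K * real d * exp (- \<theta> * (ln (\<Lambda> / F))\<^sup>2) \<le> 1 / (2 * s + 4)"
    and Pm: "p_max n mut f d \<le> Pm"
    and fitr: "f ` {x. length x = n} = {0..d}"
    and M1: "\<And>x y. length x = n \<Longrightarrow> y \<in> set_pmf (mut x) \<Longrightarrow> length y = n"
    and clone: "\<And>x. length x = n \<Longrightarrow> pmf (mut x) x \<ge> c"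
    and M3: "\<And>x y. length x = n \<Longrightarrow> length y = n \<Longrightarrow> pmf (mut x) y > 0"
    and lenx0: "length x0 = n" and lam0: "lam0 \<ge> 1"
  shows "expected_gens F s mut f d x0 lam0 \<le> ennreal (PhiF f d F L \<theta> K \<Lambda> A B (x0, lam0))"
proof -
  define S where "S = {x. length x = n \<and> f x < d}"
  have finS: "finite S" unfolding S_def by (rule finite_subset[OF _ finite_len_lists[of n]]) auto
  have fit: "f y \<le> d" if "length y = n" for y using fitr that by auto
  obtain yopt where yopt: "length yopt = n" "f yopt = d"
  proof -
    have "d \<in> f ` {x. length x = n}" using fitr by simp
    then show ?thesis using that by auto
  qed
  have pplus_pos: "p_plus mut f x > 0" if "x \<in> S" for x
  proof -
    have lx: "length x = n" and fx: "f x < d" using that by (auto simp: S_def)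
    have "0 < pmf (mut x) yopt" using M3[OF lx yopt(1)] .
    also have "pmf (mut x) yopt = measure_pmf.prob (mut x) {yopt}" by (simp add: measure_pmf_single)
    also have "\<dots> \<le> measure_pmf.prob (mut x) {y. f y > f x}"
      using yopt fx by (intro measure_pmf.finite_measure_mono) auto
    finally show ?thesis by (simp add: p_plus_def)
  qed
  have pmn_le: "pmn \<le> p_plus mut f x" if "x \<in> S" for x
  proof -
    have "S \<noteq> {}" using that by auto
    then have "pmn = Min (p_plus mut f ` S)" unfolding pmn_def p_min_def S_def[symmetric] by simp
    then show ?thesis using finS that by simp
  qed
  have pmx: "p_plus mut f x \<le> Pm" if "x \<in> S" for x
  proof -
    have "S \<noteq> {}" using that by auto
    then have "p_max n mut f d = Max (p_plus mut f ` S)" unfolding p_max_def S_def[symmetric] by simp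
    then have "p_plus mut f x \<le> p_max n mut f d" using finS that by simp
    then show ?thesis using Pm by simp
  qed
  have pmn_pos: "pmn > 0"
  proof (cases "S = {}")
    case True
    then show ?thesis unfolding pmn_def p_min_def S_def[symmetric] by simp
  next
    case False
    then have "pmn = Min (p_plus mut f ` S)" unfolding pmn_def p_min_def S_def[symmetric] by simp
    moreover have "Min (p_plus mut f ` S) \<in> p_plus mut f ` S" using finS False by (intro Min_in) auto
    ultimately show ?thesis using pplus_pos by auto
  qed
  define Inv where "Inv st = (length (fst st) = n \<and> snd st \<ge> 1)" for st :: "bool list \<times> real"
  define Tgt where "Tgt st = (f (fst st) = d)" for st :: "bool list \<times> real"
  define Phi where "Phi st = ennreal (PhiF f d F L \<theta> K \<Lambda> A B st)" for st
  have inv_step: "Inv st'" if "Inv st" "st' \<in> set_pmf (ea_step_stopped F s mut f d st)" for st st'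
  proof (cases "Tgt st")
    case True
    then show ?thesis using that by (auto simp: ea_step_stopped_def Tgt_def)
  next
    case False
    obtain x lam where st: "st = (x, lam)" by (cases st)
    have lx: "length x = n" and lam: "lam \<ge> 1" using that(1) by (auto simp: Inv_def st)
    have kge: "nat (round lam) \<ge> 1" using round_bounds[OF lam] by simp
    from that(2) False have "st' \<in> set_pmf (ea_step F s mut f (x, lam))"
      by (simp add: ea_step_stopped_def Tgt_def st)
    then obtain ys y where ys: "ys \<in> set_pmf (iid_list (nat (round lam)) (mut x))"
      and y: "y \<in> set_pmf (select_best f ys)"
      and st': "st' = (y, if f y > f x then max 1 (lam / F) else F powr (1 / s) * lam)"
      by (auto simp: ea_step_def)
    have ne: "ys \<noteq> []" using set_iid[OF ys] kge by auto
    have "y \<in> set ys" using select_best_set[OF ne y] by simp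
    then have "y \<in> set_pmf (mut x)" using set_iid[OF ys] by auto
    then have ly: "length y = n" using M1[OF lx] by simp
    have "F powr (1 / s) \<ge> 1" using F s by (intro ge_one_powr_ge_zero) auto
    then have "1 * 1 \<le> F powr (1 / s) * lam" using lam by (intro mult_mono) auto
    then have "(if f y > f x then max 1 (lam / F) else F powr (1 / s) * lam) \<ge> 1" by simp
    then show ?thesis using ly unfolding Inv_def st' by simp
  qed
  have drift: "(\<integral>\<^sup>+ st'. Phi st' \<partial>ea_step_stopped F s mut f d st) + 1 \<le> Phi st"
    if "Inv st" "\<not> Tgt st" for st
  proof -
    obtain x lam where st: "st = (x, lam)" by (cases st)
    have lx: "length x = n" and lam: "lam \<ge> 1" using that(1) by (auto simp: Inv_def st)
    have fx: "f x < d" using that(2) fit[OF lx] by (auto simp: Tgt_def st)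
    have xS: "x \<in> S" using lx fx by (simp add: S_def)
    have "ea_step_stopped F s mut f d st = ea_step F s mut f (x, lam)"
      using that(2) by (simp add: ea_step_stopped_def Tgt_def st)
    moreover have "(\<integral>\<^sup>+ st'. ennreal (PhiF f d F L \<theta> K \<Lambda> A B st') \<partial>ea_step F s mut f (x, lam)) + 1
         \<le> ennreal (PhiF f d F L \<theta> K \<Lambda> A B (x, lam))"
      by (rule ea_step_drift[OF F s c K u th ka L A B Kb La LP eta lam lx fx _ fit clone[OF lx]
            pmn_pos pmn_le[OF xS] pmx[OF xS]]) (use M1[OF lx] in auto)
    ultimately show ?thesis by (simp add: Phi_def st)
  qed
  have tgt: "ea_step_stopped F s mut f d st = return_pmf st" if "Inv st" "Tgt st" for st
    using that by (simp add: ea_step_stopped_def Tgt_def)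
  have "(\<Sum>t. emeasure (((\<lambda>M. bind_pmf M (ea_step_stopped F s mut f d)) ^^ t) (return_pmf (x0, lam0)))
          {st. \<not> Tgt st}) \<le> Phi (x0, lam0)"
    by (rule drift_sum[where Inv = Inv and Tgt = Tgt, OF _ inv_step drift tgt])
      (simp add: Inv_def lenx0 lam0)
  then show ?thesis
    by (simp add: expected_gens_def ea_dist_def Tgt_def Phi_def measure_pmf.emeasure_eq_measure)
qed



lemma pow_lower:
  assumes "0 \<le> p" "p \<le> 1 / 2"
  shows "exp (- 2 * p * real n) \<le> (1 - p) ^ n"
proof -
  have "- p - 2 * p\<^sup>2 \<le> ln (1 - p)" by (rule ln_one_minus_pos_lower_bound) (use assms in auto)
  moreover have "2 * p\<^sup>2 \<le> p"
  proof -
    have "p * p \<le> p * (1 / 2)" using assms by (intro mult_left_mono) auto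
    then show ?thesis by (simp add: power2_eq_square)
  qed
  ultimately have l: "- 2 * p \<le> ln (1 - p)" by linarith
  have "(1 - p) ^ n = exp (ln ((1 - p) ^ n))" using assms by simp
  also have "ln ((1 - p) ^ n) = real n * ln (1 - p)" by (rule ln_realpow)
  finally have e: "(1 - p) ^ n = exp (real n * ln (1 - p))" .
  have "real n * (- 2 * p) \<le> real n * ln (1 - p)" using l by (intro mult_left_mono) auto
  then show ?thesis unfolding e by (simp add: algebra_simps)
qed

lemma ln_ev_ge: "eventually (\<lambda>n. ln (real n) \<ge> C) sequentially"
proof -
  have "filterlim (\<lambda>n. ln (real n)) at_top sequentially"
    by (rule filterlim_compose[OF ln_at_top filterlim_real_sequentially])
  then show ?thesis by (simp add: filterlim_at_top)
qed

lemma K_exists: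
  fixes b \<theta> :: real
  assumes "0 < b" "b < 1" "\<theta> > 0"
  shows "\<exists>K0. \<forall>mu\<ge>1. b powr (mu / 2) * exp (\<theta> * (ln mu)\<^sup>2) \<le> K0"
proof -
  define g where "g = - ln b / 2"
  have g: "g > 0" using assms by (simp add: g_def)
  define a where "a = 16 * \<theta>"
  show ?thesis
  proof (intro exI allI impI)
    fix mu :: real assume mu: "mu \<ge> 1"
    define t where "t = sqrt mu"
    have t: "t \<ge> 1" "t * t = mu" using mu by (auto simp: t_def)
    have "ln (mu powr (1/4)) \<le> mu powr (1/4) - 1" by (rule ln_le_minus_one) (use mu in simp)
    then have l1: "ln mu / 4 \<le> mu powr (1/4)" using mu by (simp add: ln_powr)
    have l0: "0 \<le> ln mu" using mu by simp
    have "(ln mu)\<^sup>2 \<le> (4 * mu powr (1/4))\<^sup>2" using l0 l1 by (intro power_mono) auto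
    also have "\<dots> = 16 * (mu powr (1/4))\<^sup>2" by (simp add: power2_eq_square)
    also have "(mu powr (1/4))\<^sup>2 = mu powr (1/2)"
    proof -
      have "(mu powr (1/4))\<^sup>2 = mu powr (1/4) * mu powr (1/4)" by (rule power2_eq_square)
      also have "\<dots> = mu powr (1/4 + 1/4)" by (rule powr_add[symmetric])
      finally show ?thesis by simp
    qed
    also have "mu powr (1/2) = t" using mu by (simp add: t_def powr_half_sqrt)
    finally have l2: "(ln mu)\<^sup>2 \<le> 16 * t" .
    have bp: "b powr (mu / 2) = exp (- g * mu)" using assms by (simp add: powr_def g_def)
    have "\<theta> * (ln mu)\<^sup>2 \<le> \<theta> * (16 * t)" using l2 assms by (intro mult_left_mono) auto
    moreover have "- g * mu + a * t \<le> a\<^sup>2 / (4 * g)"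
    proof -
      have "0 \<le> (a - 2 * g * t)\<^sup>2" by simp
      also have "(a - 2 * g * t)\<^sup>2 = a\<^sup>2 - 4 * g * (a * t - g * (t * t))"
        by (simp add: power2_eq_square algebra_simps)
      finally have "(4 * g) * (a * t - g * (t * t)) \<le> a\<^sup>2" by simp
      then have "a * t - g * (t * t) \<le> a\<^sup>2 / (4 * g)" using g by (simp add: pos_le_divide_eq mult.commute)
      then show ?thesis using t by simp
    qed
    ultimately have "- g * mu + \<theta> * (ln mu)\<^sup>2 \<le> a\<^sup>2 / (4 * g)" by (simp add: a_def)
    then have "exp (- g * mu) * exp (\<theta> * (ln mu)\<^sup>2) \<le> exp (a\<^sup>2 / (4 * g))"
      by (simp add: exp_add[symmetric])
    then show "b powr (mu / 2) * exp (\<theta> * (ln mu)\<^sup>2) \<le> exp (a\<^sup>2 / (4 * g))" by (simp add: bp)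
  qed
qed


lemma eta_ev:
  fixes d :: "nat \<Rightarrow> nat" and \<theta> \<epsilon> a F K s :: real
  assumes th: "\<theta> > 0" and ep: "\<epsilon> > 0" and a: "a > 0" and F: "F > 1" and K: "K \<ge> 0" and s: "s > 0"
    and few: "(\<lambda>n. ln (real (d n + 1))) \<in> o(\<lambda>n. (ln (real n))\<^sup>2)"
  shows "eventually (\<lambda>n. 2 * K * real (d n) * exp (- \<theta> * (ln (a * real n powr (\<epsilon> / 2) / F))\<^sup>2)
     \<le> 1 / (2 * s + 4)) sequentially"
proof -
  define \<delta> where "\<delta> = \<theta> * \<epsilon>\<^sup>2 / 32"
  have dp: "\<delta> > 0" using th ep by (simp add: \<delta>_def)
  define C2 where "C2 = max 1 (max (4 * (ln F - ln a) / \<epsilon>) (2 * K * (2 * s + 4) / \<delta>))"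
  have ev1: "eventually (\<lambda>n. norm (ln (real (d n + 1))) \<le> \<delta> * norm ((ln (real n))\<^sup>2)) sequentially"
    by (rule landau_o.smallD[OF few dp])
  have ev2: "eventually (\<lambda>n. ln (real n) \<ge> C2) sequentially" by (rule ln_ev_ge)
  show ?thesis using ev1 ev2
  proof eventually_elim
    case (elim n)
    define X where "X = ln (real n)"
    have X1: "X \<ge> 1" and XC: "X \<ge> 4 * (ln F - ln a) / \<epsilon>" and XK: "X \<ge> 2 * K * (2 * s + 4) / \<delta>"
      using elim(2) by (auto simp: X_def C2_def)
    have npos: "real n > 0" using X1 unfolding X_def by (cases "n = 0") auto
    have lnL: "ln (a * real n powr (\<epsilon> / 2) / F) = ln a + (\<epsilon> / 2) * X - ln F"
      using npos a F by (simp add: ln_div ln_mult ln_powr X_def)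
    have "(\<epsilon> / 4) * X \<ge> ln F - ln a" using XC ep by (simp add: field_simps)
    moreover have "(\<epsilon> / 2) * X = (\<epsilon> / 4) * X + (\<epsilon> / 4) * X" by simp
    ultimately have lnL2: "ln (a * real n powr (\<epsilon> / 2) / F) \<ge> (\<epsilon> / 4) * X" unfolding lnL by linarith
    have "0 \<le> (\<epsilon> / 4) * X" using ep X1 by simp
    then have "((\<epsilon> / 4) * X)\<^sup>2 \<le> (ln (a * real n powr (\<epsilon> / 2) / F))\<^sup>2"
      using lnL2 by (intro power_mono) auto
    then have "\<theta> * ((\<epsilon> / 4) * X)\<^sup>2 \<le> \<theta> * (ln (a * real n powr (\<epsilon> / 2) / F))\<^sup>2"
      using th by (intro mult_left_mono) auto
    moreover have "\<theta> * ((\<epsilon> / 4) * X)\<^sup>2 = 2 * \<delta> * X\<^sup>2" by (simp add: \<delta>_def power2_eq_square)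
    ultimately have e1: "exp (- \<theta> * (ln (a * real n powr (\<epsilon> / 2) / F))\<^sup>2) \<le> exp (- (2 * \<delta> * X\<^sup>2))"
      by simp
    have "ln (real (d n + 1)) \<le> \<delta> * X\<^sup>2" using elim(1) by (simp add: X_def)
    then have "real (d n + 1) \<le> exp (\<delta> * X\<^sup>2)"
      by (metis exp_ln exp_le_cancel_iff of_nat_0_less_iff zero_less_Suc add.commute plus_1_eq_Suc)
    then have e2: "real (d n) \<le> exp (\<delta> * X\<^sup>2)" by simp
    have "real (d n) * exp (- \<theta> * (ln (a * real n powr (\<epsilon> / 2) / F))\<^sup>2) \<le> exp (\<delta> * X\<^sup>2) * exp (- (2 * \<delta> * X\<^sup>2))"
      using e1 e2 by (intro mult_mono) auto
    also have "\<dots> = exp (- (\<delta> * X\<^sup>2))" by (simp add: exp_add[symmetric])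
    finally have e3: "real (d n) * exp (- \<theta> * (ln (a * real n powr (\<epsilon> / 2) / F))\<^sup>2) \<le> exp (- (\<delta> * X\<^sup>2))" .
    have "X \<le> X\<^sup>2" using X1 by (simp add: power2_eq_square)
    then have "\<delta> * X \<le> \<delta> * X\<^sup>2" using dp by (intro mult_left_mono) auto
    moreover have "2 * K * (2 * s + 4) \<le> \<delta> * X" using XK dp by (simp add: field_simps)
    moreover have "\<delta> * X\<^sup>2 \<le> exp (\<delta> * X\<^sup>2)"
    proof -
      have "\<delta> * X\<^sup>2 + 1 \<le> exp (\<delta> * X\<^sup>2)" using exp_ge_add_one_self[of "\<delta> * X\<^sup>2"] by (simp add: add.commute)
      then show ?thesis by linarith
    qed
    ultimately have big: "2 * K * (2 * s + 4) \<le> exp (\<delta> * X\<^sup>2)" by linarith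
    have "2 * K * exp (- (\<delta> * X\<^sup>2)) = 2 * K / exp (\<delta> * X\<^sup>2)" by (simp add: exp_minus field_simps)
    also have "\<dots> \<le> 1 / (2 * s + 4)" using big s by (simp add: divide_simps mult.commute)
    finally have e4: "2 * K * exp (- (\<delta> * X\<^sup>2)) \<le> 1 / (2 * s + 4)" .
    have "2 * K * real (d n) * exp (- \<theta> * (ln (a * real n powr (\<epsilon> / 2) / F))\<^sup>2)
        = 2 * K * (real (d n) * exp (- \<theta> * (ln (a * real n powr (\<epsilon> / 2) / F))\<^sup>2))" by simp
    also have "\<dots> \<le> 2 * K * exp (- (\<delta> * X\<^sup>2))" using e3 K by (intro mult_left_mono) auto
    finally show ?case using e4 by simp
  qed
qed


lemma std_pos:
  assumes "0 < p" "p < 1" "length y = length x"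
  shows "pmf (std_bit_mut p x) y > 0"
proof -
  have "y \<in> set_pmf (std_bit_mut p x)" using std_set_full[OF assms(1,2)] assms(3) by simp
  then show ?thesis by (simp add: pmf_positive)
qed

lemma mut_std:
  fixes p :: "nat \<Rightarrow> real"
  assumes bo: "p \<in> O(\<lambda>n. 1 / real n)" and lo: "\<exists>k. eventually (\<lambda>n. p n \<ge> real n powr (- k)) sequentially"
  shows "\<exists>c. 0 < c \<and> c < 1 \<and> eventually (\<lambda>n. 0 < p n \<and> p n < 1 \<and>
     (\<forall>x. length x = n \<longrightarrow> pmf (std_bit_mut (p n) x) x \<ge> c)) sequentially"
proof -
  obtain M0 where M0: "M0 > 0" and ev1: "eventually (\<lambda>n. norm (p n) \<le> M0 * norm (1 / real n)) sequentially"
    using landau_o.bigE[OF bo] by blast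
  obtain k where ev2: "eventually (\<lambda>n. p n \<ge> real n powr (- k)) sequentially" using lo by blast
  have ev3: "eventually (\<lambda>n. n \<ge> nat \<lceil>2 * M0\<rceil> + 1) sequentially" by (rule eventually_ge_at_top)
  define c where "c = min (1 / 2) (exp (- 2 * M0))"
  have c: "0 < c" "c < 1" by (auto simp: c_def)
  have "eventually (\<lambda>n. 0 < p n \<and> p n < 1 \<and>
     (\<forall>x. length x = n \<longrightarrow> pmf (std_bit_mut (p n) x) x \<ge> c)) sequentially"
    using ev1 ev2 ev3
  proof eventually_elim
    case (elim n)
    have n1: "real n \<ge> 1" using elim(3) by simp
    have n2: "real n \<ge> 2 * M0" using elim(3) by linarith
    have pp: "p n > 0" using elim(2) n1 by (smt (verit) powr_gt_zero)
    have pM: "p n \<le> M0 / real n" using elim(1) pp n1 by simp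
    have pn: "p n * real n \<le> M0" using pM n1 by (simp add: field_simps)
    have "M0 / real n \<le> 1 / 2" using n2 n1 M0 by (simp add: field_simps)
    then have ph: "p n \<le> 1 / 2" using pM by linarith
    have cl: "pmf (std_bit_mut (p n) x) x \<ge> c" if "length x = n" for x
    proof -
      have "pmf (std_bit_mut (p n) x) x = (1 - p n) ^ n" using std_clone[of "p n" x] pp ph that by simp
      moreover have "exp (- 2 * p n * real n) \<le> (1 - p n) ^ n" using pow_lower pp ph by simp
      moreover have "exp (- 2 * M0) \<le> exp (- 2 * p n * real n)" using pn by (simp add: mult.assoc)
      moreover have "c \<le> exp (- 2 * M0)" by (simp add: c_def)
      ultimately show ?thesis by linarith
    qed
    show ?case using pp ph cl by simp
  qed
  then show ?thesis using c by blast
qed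

lemma mut_heavy:
  fixes \<beta> :: real
  assumes b: "\<beta> > 1"
  shows "\<exists>c. 0 < c \<and> c < 1 \<and> (\<forall>n\<ge>2. \<forall>x. length x = n \<longrightarrow>
     pmf (heavy_tailed_mut \<beta> x) x \<ge> c \<and> (\<forall>y. length y = n \<longrightarrow> pmf (heavy_tailed_mut \<beta> x) y > 0)
     \<and> (\<forall>y\<in>set_pmf (heavy_tailed_mut \<beta> x). length y = n))"
proof -
  define Z where "Z = (\<Sum>j. real j powr (-\<beta>))"
  have summ: "summable (\<lambda>j. real j powr (-\<beta>))" using b by (simp add: summable_real_powr_iff)
  have "(\<Sum>j\<in>{1}. real j powr (-\<beta>)) \<le> Z" unfolding Z_def by (rule sum_le_suminf[OF summ]) auto
  then have Z1: "Z \<ge> 1" by simp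
  define c where "c = min (1 / 2) (exp (- 2) / Z)"
  have c: "0 < c" "c < 1" using Z1 by (auto simp: c_def)
  have "\<forall>n\<ge>2. \<forall>x. length x = n \<longrightarrow>
     pmf (heavy_tailed_mut \<beta> x) x \<ge> c \<and> (\<forall>y. length y = n \<longrightarrow> pmf (heavy_tailed_mut \<beta> x) y > 0)
     \<and> (\<forall>y\<in>set_pmf (heavy_tailed_mut \<beta> x). length y = n)"
  proof (intro allI impI conjI)
    fix n :: nat and x :: "bool list" assume n: "n \<ge> 2" and lx: "length x = n"
    have n2: "2 \<le> length x" using n lx by simp
    have pl1: "pmf (power_law_pmf (length x) \<beta>) 1 \<ge> 1 / Z" using power_law_one[OF n2 b] by (simp add: Z_def)
    have pl1p: "pmf (power_law_pmf (length x) \<beta>) 1 > 0" using pl1 Z1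
      by (smt (verit) divide_pos_pos)
    have rl: "real (length x) \<ge> 2" using n2 by simp
    have q3: "1 / real (length x) \<le> 1 / 2" using rl by (intro divide_left_mono) auto
    have q: "0 < 1 / real (length x)" "1 / real (length x) < 1" "1 / real (length x) \<le> 1 / 2"
      using rl q3 by auto
    have "exp (- 2 * (1 / real (length x)) * real (length x)) \<le> (1 - 1 / real (length x)) ^ length x"
      by (rule pow_lower) (use q in auto)
    then have cl0: "exp (- 2) \<le> pmf (std_bit_mut (1 / real (length x)) x) x"
      using n2 q by (simp add: std_clone)
    have "exp (- 2) / Z \<le> pmf (std_bit_mut (1 / real (length x)) x) x * pmf (power_law_pmf (length x) \<beta>) 1"
    proof -
      have "exp (- 2) * (1 / Z) \<le> pmf (std_bit_mut (1 / real (length x)) x) x * pmf (power_law_pmf (length x) \<beta>) 1"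
        using cl0 pl1 Z1 by (intro mult_mono) auto
      then show ?thesis by simp
    qed
    also have "\<dots> \<le> pmf (heavy_tailed_mut \<beta> x) x" by (rule heavy_pmf_ge[OF n2])
    finally show "pmf (heavy_tailed_mut \<beta> x) x \<ge> c" by (simp add: c_def)
    show "\<forall>y\<in>set_pmf (heavy_tailed_mut \<beta> x). length y = n"
      using lx by (auto simp: heavy_tailed_mut_def dest: std_set_len)
    fix y :: "bool list" assume ly: "length y = n"
    have "0 < pmf (std_bit_mut (1 / real (length x)) x) y * pmf (power_law_pmf (length x) \<beta>) 1"
      using std_pos[OF q(1,2)] ly lx pl1p by simp
    also have "\<dots> \<le> pmf (heavy_tailed_mut \<beta> x) y" by (rule heavy_pmf_ge[OF n2])
    finally show "pmf (heavy_tailed_mut \<beta> x) y > 0" .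
  qed
  then show ?thesis using c by blast
qed



lemma mut_all:
  fixes p :: "nat \<Rightarrow> real" and mut :: "nat \<Rightarrow> bool list \<Rightarrow> bool list pmf"
  assumes mutation:
      "((\<forall>n x. mut n x = std_bit_mut (p n) x)
          \<and> p \<in> O(\<lambda>n. 1 / real n)
          \<and> (\<exists>k. \<forall>\<^sub>F n in sequentially. p n \<ge> real n powr (- k)))
       \<or> (\<exists>\<beta>>1. \<forall>n x. mut n x = heavy_tailed_mut \<beta> x)"
  shows "\<exists>c N1. 0 < c \<and> c < 1 \<and> (\<forall>n\<ge>N1. \<forall>x. length x = n \<longrightarrow>
     (\<forall>y\<in>set_pmf (mut n x). length y = n) \<and> pmf (mut n x) x \<ge> c
     \<and> (\<forall>y. length y = n \<longrightarrow> pmf (mut n x) y > 0))"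
  using mutation
proof
  assume h: "(\<forall>n x. mut n x = std_bit_mut (p n) x) \<and> p \<in> O(\<lambda>n. 1 / real n)
          \<and> (\<exists>k. \<forall>\<^sub>F n in sequentially. p n \<ge> real n powr (- k))"
  have hh: "p \<in> O(\<lambda>n. 1 / real n)" "\<exists>k. \<forall>\<^sub>F n in sequentially. p n \<ge> real n powr (- k)"
    using h by auto
  obtain c where c: "0 < c" "c < 1" and ev: "eventually (\<lambda>n. 0 < p n \<and> p n < 1 \<and>
     (\<forall>x. length x = n \<longrightarrow> pmf (std_bit_mut (p n) x) x \<ge> c)) sequentially"
    using mut_std[OF hh] by blast
  obtain N1 where N1: "\<forall>n\<ge>N1. 0 < p n \<and> p n < 1 \<and>
     (\<forall>x. length x = n \<longrightarrow> pmf (std_bit_mut (p n) x) x \<ge> c)"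
    using ev by (auto simp: eventually_sequentially)
  have "\<forall>n\<ge>N1. \<forall>x. length x = n \<longrightarrow>
     (\<forall>y\<in>set_pmf (mut n x). length y = n) \<and> pmf (mut n x) x \<ge> c
     \<and> (\<forall>y. length y = n \<longrightarrow> pmf (mut n x) y > 0)"
  proof (intro allI impI conjI ballI)
    fix n x assume n: "n \<ge> N1" and lx: "length (x :: bool list) = n"
    have pp: "0 < p n" "p n < 1" using N1 n by auto
    show "pmf (mut n x) x \<ge> c" using N1 n lx h by auto
    fix y assume "y \<in> set_pmf (mut n x)"
    then show "length y = n" using h lx by (auto dest: std_set_len)
  next
    fix n x y assume n: "n \<ge> N1" and lx: "length (x :: bool list) = n" and ly: "length (y :: bool list) = n"
    have pp: "0 < p n" "p n < 1" using N1 n by auto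
    show "pmf (mut n x) y > 0" using std_pos[OF pp] lx ly h by auto
  qed
  then show ?thesis using c by blast
next
  assume "\<exists>\<beta>>1. \<forall>n x. mut n x = heavy_tailed_mut \<beta> x"
  then obtain \<beta> where b: "\<beta> > 1" and m: "\<forall>n x. mut n x = heavy_tailed_mut \<beta> x" by blast
  have m': "\<And>n x. mut n x = heavy_tailed_mut \<beta> x" using m by blast
  obtain c where c: "0 < c" "c < 1" and hc: "\<forall>n\<ge>2. \<forall>x. length x = n \<longrightarrow>
     pmf (heavy_tailed_mut \<beta> x) x \<ge> c \<and> (\<forall>y. length y = n \<longrightarrow> pmf (heavy_tailed_mut \<beta> x) y > 0)
     \<and> (\<forall>y\<in>set_pmf (heavy_tailed_mut \<beta> x). length y = n)"
    using mut_heavy[OF b] by blast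
  have "\<forall>n\<ge>2. \<forall>x. length x = n \<longrightarrow>
     (\<forall>y\<in>set_pmf (mut n x). length y = n) \<and> pmf (mut n x) x \<ge> c
     \<and> (\<forall>y. length y = n \<longrightarrow> pmf (mut n x) y > 0)"
    unfolding m' using hc by blast
  then show ?thesis using c by blast
qed

lemma pmin_facts:
  fixes mut :: "bool list \<Rightarrow> bool list pmf" and f :: "bool list \<Rightarrow> nat"
  assumes fitr: "f ` {x. length x = n} = {0..d}"
    and M3: "\<And>x y. length x = n \<Longrightarrow> length y = n \<Longrightarrow> pmf (mut x) y > 0"
  shows "0 < p_min n mut f d" "p_min n mut f d \<le> 1"
proof -
  define S where "S = {x. length x = n \<and> f x < d}"
  have finS: "finite S" unfolding S_def by (rule finite_subset[OF _ finite_len_lists[of n]]) auto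
  obtain yopt where yopt: "length yopt = n" "f yopt = d"
  proof -
    have "d \<in> f ` {x. length x = n}" using fitr by simp
    then show ?thesis using that by auto
  qed
  have pplus_pos: "p_plus mut f x > 0" if "x \<in> S" for x
  proof -
    have lx: "length x = n" and fx: "f x < d" using that by (auto simp: S_def)
    have "0 < pmf (mut x) yopt" using M3[OF lx yopt(1)] .
    also have "pmf (mut x) yopt = measure_pmf.prob (mut x) {yopt}" by (simp add: measure_pmf_single)
    also have "\<dots> \<le> measure_pmf.prob (mut x) {y. f y > f x}"
      using yopt fx by (intro measure_pmf.finite_measure_mono) auto
    finally show ?thesis by (simp add: p_plus_def)
  qed
  have "0 < p_min n mut f d \<and> p_min n mut f d \<le> 1"
  proof (cases "S = {}")
    case True
    then show ?thesis unfolding p_min_def S_def[symmetric] by simp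
  next
    case False
    then have e: "p_min n mut f d = Min (p_plus mut f ` S)" unfolding p_min_def S_def[symmetric] by simp
    have "Min (p_plus mut f ` S) \<in> p_plus mut f ` S" using finS False by (intro Min_in) auto
    then obtain x where x: "x \<in> S" "Min (p_plus mut f ` S) = p_plus mut f x" by auto
    have "p_plus mut f x \<le> 1" by (simp add: p_plus_def)
    then show ?thesis using e x pplus_pos by auto
  qed
  then show "0 < p_min n mut f d" "p_min n mut f d \<le> 1" by auto
qed


lemma PhiF_bound:
  fixes F s L \<theta> K \<Lambda> A B lam0 pmn u :: real
  assumes F: "F > 1" and K: "K \<ge> 0" and th: "\<theta> \<ge> 0" and A: "A \<ge> 0" and B: "B \<ge> 0"
    and u: "u \<ge> 1" and pmn: "0 < pmn" "pmn \<le> 1" and L: "L = log F (2 * u / pmn)"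
    and lam0: "lam0 \<ge> 1" and fx: "f x0 \<le> d"
  shows "PhiF f d F L \<theta> K \<Lambda> A B (x0, lam0)
     \<le> (A * (1 + K) + B * log F (2 * u) + B / ln F) * (real d + ln (1 / pmn))"
proof -
  have lnF: "ln F > 0" using F by simp
  have lp: "ln (1 / pmn) \<ge> 0" using pmn by simp
  have l2u: "log F (2 * u) \<ge> 0" using F u by simp
  define C where "C = A * (1 + K) + B * log F (2 * u) + B / ln F"
  have Cn: "C \<ge> 0" using A K B l2u lnF by (simp add: C_def)
  show ?thesis
  proof (cases "f x0 = d")
    case True
    then show ?thesis using Cn lp by (simp add: PhiF_def C_def[symmetric])
  next
    case False
    then have d1: "real d \<ge> 1" using fx by simp
    have "ln (2 * u / pmn) = ln ((2 * u) * (1 / pmn))" by simp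
    also have "\<dots> = ln (2 * u) + ln (1 / pmn)" using u pmn by (intro ln_mult_pos) auto
    finally have "L = (ln (2 * u) + ln (1 / pmn)) / ln F" using L by (simp add: log_def)
    then have Leq: "L = log F (2 * u) + ln (1 / pmn) / ln F" by (simp add: log_def add_divide_distrib)
    have L0: "L \<ge> 0" using Leq l2u lp lnF by simp
    have G: "Gf F L lam0 \<le> L"
    proof -
      have "log F (max 1 lam0) \<ge> 0" using F by simp
      then show ?thesis using L0 by (simp add: Gf_def)
    qed
    have W: "Wf \<theta> K \<Lambda> lam0 \<le> K" by (rule Wf_le_K[OF K th])
    have "PhiF f d F L \<theta> K \<Lambda> A B (x0, lam0) = A * real (d - f x0) + (B * Gf F L lam0 + A * real d * Wf \<theta> K \<Lambda> lam0)"
      using False by (simp add: PhiF_def)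
    also have "\<dots> \<le> A * real d + (B * L + A * real d * K)"
    proof -
      have "A * real (d - f x0) \<le> A * real d" using A by (intro mult_left_mono) auto
      moreover have "B * Gf F L lam0 \<le> B * L" using G B by (intro mult_left_mono) auto
      moreover have "A * real d * Wf \<theta> K \<Lambda> lam0 \<le> A * real d * K" using W A by (intro mult_left_mono) auto
      ultimately show ?thesis by linarith
    qed
    also have "\<dots> = A * (1 + K) * real d + B * log F (2 * u) + (B / ln F) * ln (1 / pmn)"
      unfolding Leq by (simp add: algebra_simps)
    also have "\<dots> \<le> A * (1 + K) * real d + B * log F (2 * u) * real d + (B / ln F) * ln (1 / pmn)"
    proof -
      have "B * log F (2 * u) * 1 \<le> B * log F (2 * u) * real d" using d1 B l2u by (intro mult_left_mono) auto
      then show ?thesis by simp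
    qed
    also have "\<dots> \<le> C * (real d + ln (1 / pmn))"
    proof -
      have "C * (real d + ln (1 / pmn)) = A * (1 + K) * real d + B * log F (2 * u) * real d + (B / ln F) * real d
          + (A * (1 + K) + B * log F (2 * u)) * ln (1 / pmn) + (B / ln F) * ln (1 / pmn)"
        by (simp add: C_def algebra_simps)
      moreover have "(B / ln F) * real d \<ge> 0" using B lnF by simp
      moreover have "(A * (1 + K) + B * log F (2 * u)) * ln (1 / pmn) \<ge> 0" using A K B l2u lp by simp
      ultimately show ?thesis by linarith
    qed
    finally show ?thesis by (simp add: C_def)
  qed
qed


theorem theorem3p1:
  fixes F s :: real
    and p :: "nat \<Rightarrow> real"
    and mut :: "nat \<Rightarrow> bool list \<Rightarrow> bool list pmf"
    and f :: "nat \<Rightarrow> bool list \<Rightarrow> nat"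
    and d :: "nat \<Rightarrow> nat"
  assumes F: "F > 1" and s: "s > 0"
    and mutation:
      "((\<forall>n x. mut n x = std_bit_mut (p n) x)
          \<and> p \<in> O(\<lambda>n. 1 / real n)
          \<and> (\<exists>k. \<forall>\<^sub>F n in sequentially. p n \<ge> real n powr (- k)))
       \<or> (\<exists>\<beta>>1. \<forall>n x. mut n x = heavy_tailed_mut \<beta> x)"
    and fitness_values: "\<And>n. f n ` {x. length x = n} = {0..d n}"
    and everywhere_hard:
      "\<exists>\<epsilon>. 0 < \<epsilon> \<and> \<epsilon> < 1 \<and>
         (\<lambda>n. p_max n (mut n) (f n) (d n)) \<in> O(\<lambda>n. real n powr (- \<epsilon>))"
    and few_values: "(\<lambda>n. ln (real (d n + 1))) \<in> o(\<lambda>n. (ln (real n))\<^sup>2)"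
  shows "\<exists>C N. \<forall>n \<ge> N. \<forall>x0 lam0. length x0 = n \<longrightarrow> lam0 \<ge> 1 \<longrightarrow>
           expected_gens F s (mut n) (f n) (d n) x0 lam0
             \<le> ennreal (C * (real (d n) + ln (1 / p_min n (mut n) (f n) (d n))))"
proof -
  obtain c N1 where c: "0 < c" "c < 1" and mf: "\<forall>n\<ge>N1. \<forall>x. length x = n \<longrightarrow>
     (\<forall>y\<in>set_pmf (mut n x). length y = n) \<and> pmf (mut n x) x \<ge> c
     \<and> (\<forall>y. length y = n \<longrightarrow> pmf (mut n x) y > 0)"
    using mut_all[OF mutation] by blast
  obtain \<epsilon> where ep: "0 < \<epsilon>" "\<epsilon> < 1"
    and hardO: "(\<lambda>n. p_max n (mut n) (f n) (d n)) \<in> O(\<lambda>n. real n powr (- \<epsilon>))"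
    using everywhere_hard by blast
  obtain M where M: "M > 0"
    and evM: "eventually (\<lambda>n. norm (p_max n (mut n) (f n) (d n)) \<le> M * norm (real n powr (- \<epsilon>))) sequentially"
    using landau_o.bigE[OF hardO] by blast
  define u where "u = F powr (1 / s)"
  define \<theta> where "\<theta> = 1 / (2 * ln F)"
  define \<kappa> where "\<kappa> = 1 - exp (- \<theta> * (ln u)\<^sup>2)"
  define A where "A = 2 * s + 4"
  define B where "B = 2 * s"
  have u1: "u > 1" unfolding u_def using F s by (intro gr_one_powr) auto
  have lnF: "ln F > 0" using F by simp
  have thp: "\<theta> > 0" using lnF by (simp add: \<theta>_def)
  have kap: "0 < \<kappa>" using thp u1 by (simp add: \<kappa>_def)
  obtain K0 where K0: "\<forall>mu\<ge>1. (1 - c) powr (mu / 2) * exp (\<theta> * (ln mu)\<^sup>2) \<le> K0"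
    using K_exists[of "1 - c" \<theta>] c thp by auto
  have K0pos: "K0 \<ge> 0"
  proof -
    have "(1 - c) powr (1 / 2) * exp (\<theta> * (ln 1)\<^sup>2) \<le> K0" using K0 by auto
    moreover have "(1 - c) powr (1 / 2) * exp (\<theta> * (ln 1)\<^sup>2) \<ge> 0" by simp
    ultimately show ?thesis by linarith
  qed
  define K where "K = 4 * K0 / \<kappa>"
  have Kn: "K \<ge> 0" using K0pos kap by (simp add: K_def)
  have Kb: "(1 - c) powr (mu / 2) \<le> \<kappa> * K * exp (- \<theta> * (ln mu)\<^sup>2) / 4" if mu: "mu \<ge> 1" for mu
  proof -
    have kk: "\<kappa> * K / 4 = K0" using kap by (simp add: K_def)
    have "(1 - c) powr (mu / 2) = ((1 - c) powr (mu / 2) * exp (\<theta> * (ln mu)\<^sup>2)) * exp (- \<theta> * (ln mu)\<^sup>2)"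
      by (simp add: mult.assoc exp_minus)
    also have "\<dots> \<le> K0 * exp (- \<theta> * (ln mu)\<^sup>2)" using K0 mu by (intro mult_right_mono) auto
    also have "\<dots> = \<kappa> * K * exp (- \<theta> * (ln mu)\<^sup>2) / 4" using kk by simp
    finally show ?thesis .
  qed
  define a where "a = sqrt (\<kappa> / (16 * M))"
  have ap: "a > 0" using kap M by (simp add: a_def)
  define \<Lambda> where "\<Lambda> n = a * real n powr (\<epsilon> / 2)" for n :: nat
  define Pm where "Pm n = M * real n powr (- \<epsilon>)" for n :: nat
  have LP: "(\<Lambda> n)\<^sup>2 * Pm n \<le> \<kappa> / 16" if n: "n \<ge> 1" for n :: nat
  proof -
    have np: "real n > 0" using n by simp
    have "(real n powr (\<epsilon> / 2))\<^sup>2 = real n powr (\<epsilon> / 2) * real n powr (\<epsilon> / 2)" by (rule power2_eq_square)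
    also have "\<dots> = real n powr (\<epsilon> / 2 + \<epsilon> / 2)" by (rule powr_add[symmetric])
    finally have p1: "(real n powr (\<epsilon> / 2))\<^sup>2 = real n powr \<epsilon>" by simp
    have p2: "real n powr \<epsilon> * real n powr (- \<epsilon>) = 1"
      using np by (simp add: powr_add[symmetric])
    have a2: "a\<^sup>2 = \<kappa> / (16 * M)" using kap M by (simp add: a_def)
    have "(\<Lambda> n)\<^sup>2 * Pm n = a\<^sup>2 * M * (real n powr \<epsilon> * real n powr (- \<epsilon>))"
      by (simp add: \<Lambda>_def Pm_def power_mult_distrib p1 algebra_simps)
    also have "\<dots> = \<kappa> / 16" using a2 M p2 by simp
    finally show ?thesis by simp
  qed
  have evL: "eventually (\<lambda>n. \<Lambda> n \<ge> F) sequentially"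
    using ln_ev_ge[of "2 * F / (a * \<epsilon>)"]
  proof eventually_elim
    case (elim n)
    have pos: "2 * F / (a * \<epsilon>) > 0" using F ap ep by simp
    then have np: "real n > 0" using elim by (cases "n = 0") auto
    have "real n powr (\<epsilon> / 2) = exp ((\<epsilon> / 2) * ln (real n))" using np by (simp add: powr_def)
    also have "\<dots> \<ge> 1 + (\<epsilon> / 2) * ln (real n)" by (rule exp_ge_add_one_self)
    finally have "real n powr (\<epsilon> / 2) \<ge> (\<epsilon> / 2) * ln (real n)" by simp
    moreover have "(\<epsilon> / 2) * ln (real n) \<ge> (\<epsilon> / 2) * (2 * F / (a * \<epsilon>))"
      using elim ep by (intro mult_left_mono) auto
    moreover have "(\<epsilon> / 2) * (2 * F / (a * \<epsilon>)) = F / a" using ep ap by (simp add: field_simps)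
    ultimately have "real n powr (\<epsilon> / 2) \<ge> F / a" by linarith
    then have "a * real n powr (\<epsilon> / 2) \<ge> a * (F / a)" using ap by (intro mult_left_mono) auto
    then show ?case using ap by (simp add: \<Lambda>_def)
  qed
  have evE: "eventually (\<lambda>n. 2 * K * real (d n) * exp (- \<theta> * (ln (a * real n powr (\<epsilon> / 2) / F))\<^sup>2)
     \<le> 1 / (2 * s + 4)) sequentially"
    by (rule eta_ev[OF thp ep(1) ap F Kn s few_values])
  obtain N0 where N0: "\<forall>n\<ge>N0. norm (p_max n (mut n) (f n) (d n)) \<le> M * norm (real n powr (- \<epsilon>))
      \<and> \<Lambda> n \<ge> F \<and> 2 * K * real (d n) * exp (- \<theta> * (ln (a * real n powr (\<epsilon> / 2) / F))\<^sup>2) \<le> 1 / (2 * s + 4)"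
    using eventually_conj[OF evM eventually_conj[OF evL evE]] by (auto simp: eventually_sequentially)
  define C where "C = A * (1 + K) + B * log F (2 * u) + B / ln F"
  show ?thesis
  proof (intro exI[of _ C] exI[of _ "max N0 (max N1 1)"] allI impI)
    fix n x0 lam0 assume n: "max N0 (max N1 1) \<le> n" and lx0: "length (x0 :: bool list) = n" and lam0: "1 \<le> (lam0 :: real)"
    have nN0: "n \<ge> N0" and nN1: "n \<ge> N1" and n1: "n \<ge> 1" using n by auto
    have M1: "\<And>x y. length x = n \<Longrightarrow> y \<in> set_pmf (mut n x) \<Longrightarrow> length y = n" using mf nN1 by blast
    have clone: "\<And>x. length x = n \<Longrightarrow> pmf (mut n x) x \<ge> c" using mf nN1 by blast
    have M3: "\<And>x y. length x = n \<Longrightarrow> length y = n \<Longrightarrow> pmf (mut n x) y > 0" using mf nN1 by blast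
    have pm: "0 < p_min n (mut n) (f n) (d n)" "p_min n (mut n) (f n) (d n) \<le> 1"
      using pmin_facts[OF fitness_values M3] by auto
    have Pmb: "p_max n (mut n) (f n) (d n) \<le> Pm n"
    proof -
      have "p_max n (mut n) (f n) (d n) \<le> norm (p_max n (mut n) (f n) (d n))" by simp
      also have "\<dots> \<le> M * norm (real n powr (- \<epsilon>))" using N0 nN0 by blast
      also have "\<dots> = Pm n" by (simp add: Pm_def)
      finally show ?thesis .
    qed
    have La: "\<Lambda> n \<ge> F" using N0 nN0 by blast
    have eta: "2 * K * real (d n) * exp (- \<theta> * (ln (\<Lambda> n / F))\<^sup>2) \<le> 1 / (2 * s + 4)"
      using N0 nN0 by (simp add: \<Lambda>_def)
    have "expected_gens F s (mut n) (f n) (d n) x0 lam0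
        \<le> ennreal (PhiF (f n) (d n) F (log F (2 * u / p_min n (mut n) (f n) (d n))) \<theta> K (\<Lambda> n) A B (x0, lam0))"
      by (rule core_bound[OF F s c Kn u_def \<theta>_def \<kappa>_def refl refl A_def B_def Kb La LP[OF n1] eta Pmb
            fitness_values M1 clone M3 lx0 lam0])
    also have "\<dots> \<le> ennreal (C * (real (d n) + ln (1 / p_min n (mut n) (f n) (d n))))"
    proof (rule ennreal_leI)
      have fx: "f n x0 \<le> d n" using fitness_values[of n] lx0 by auto
      show "PhiF (f n) (d n) F (log F (2 * u / p_min n (mut n) (f n) (d n))) \<theta> K (\<Lambda> n) A B (x0, lam0)
          \<le> C * (real (d n) + ln (1 / p_min n (mut n) (f n) (d n)))"
      proof -
        have h1: "0 \<le> \<theta>" using thp by simp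
        have h2: "0 \<le> A" using s by (simp add: A_def)
        have h3: "0 \<le> B" using s by (simp add: B_def)
        have h4: "1 \<le> u" using u1 by simp
        show ?thesis unfolding C_def
          by (rule PhiF_bound[where f="f n" and d="d n", OF F Kn h1 h2 h3 h4 pm refl lam0 fx])
      qed
    qed
    finally show "expected_gens F s (mut n) (f n) (d n) x0 lam0
        \<le> ennreal (C * (real (d n) + ln (1 / p_min n (mut n) (f n) (d n))))" .
  qed
qed


end
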